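(* Let $(V,c)$ be a network satisfying the Yang-type inequality with constant $C_{YT}$. Let $\Omega\subset V$ be finite with Dirichlet eigenvalues $\lambda_1\le\cdots\le\lambda_{|\Omega|}$, and let $1\le k<|\Omega|$. If $\lambda_k\le1-\delta$ for some $\delta>0$, then $$\lambda_{k+1}-\lambda_{\min}\le(1+\theta)\,k^{\theta/2}(\lambda_1-\lambda_{\min}),\qquad\text{where }\theta=\frac{C_{YT}}{\delta}.$$
   Context: A network is a pair $(V,c)$ with $V$ countable and $c:V\times V\to[0,\infty)$ symmetric with $\pi(x)=\sum_yc(x,y)<\infty$; $P(x,y)=c(x,y)/\pi(x)$ and $\Delta f(x)=\sum_yP(x,y)(f(x)-f(y))$, a bounded self-adjoint operator on $L^2(V,\pi)$ (inner product $\sum_x\pi(x)f(x)\overline{g(x)}$) with spectrum in $[0,2]$; $\lambda_{\min}$ is the bottom of its spectrum. For finite $\Omega\subset V$, the Dirichlet eigenvalues $\lambda_1\le\cdots\le\lambda_{|\Omega|}$ of $\Omega$ are the eigenvalues (with multiplicity) of the compression $\Delta_\Omega f=\mathbf 1_\Omega\cdot\Delta f$ on functions vanishing outside $\Omega$. The network satisfies the Yang-type inequality with constant $C_{YT}$ if for every finite $\Omega\subset V$ and every $k<|\Omega|$: $\sum_{i=1}^k(\lambda_{k+1}-\lambda_i)^2(1-\lambda_i)\le C_{YT}\sum_{i=1}^k(\lambda_{k+1}-\lambda_i)(\lambda_i-\lambda_{\min})$. *)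

theory Defs
  imports "HOL-Analysis.Analysis" "Jordan_Normal_Form.Char_Poly"
begin

text \<open>The vertex set V is the (countable) type 'a; c is the conductance.\<close>

definition pi_w :: "('a \<Rightarrow> 'a \<Rightarrow> real) \<Rightarrow> 'a \<Rightarrow> real" where
  "pi_w c x = infsum (c x) UNIV"

definition network :: "('a::countable \<Rightarrow> 'a \<Rightarrow> real) \<Rightarrow> bool" where
  "network c \<longleftrightarrow> (\<forall>x y. 0 \<le> c x y) \<and> (\<forall>x y. c x y = c y x)
     \<and> (\<forall>x. c x summable_on UNIV) \<and> (\<forall>x. 0 < pi_w c x)"

definition trans_P :: "('a \<Rightarrow> 'a \<Rightarrow> real) \<Rightarrow> 'a \<Rightarrow> 'a \<Rightarrow> real" where
  "trans_P c x y = c x y / pi_w c x"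

definition lap :: "('a \<Rightarrow> 'a \<Rightarrow> real) \<Rightarrow> ('a \<Rightarrow> complex) \<Rightarrow> 'a \<Rightarrow> complex" where
  "lap c f x = infsum (\<lambda>y. complex_of_real (trans_P c x y) * (f x - f y)) UNIV"

definition l2 :: "('a \<Rightarrow> 'a \<Rightarrow> real) \<Rightarrow> ('a \<Rightarrow> complex) set" where
  "l2 c = {f. (\<lambda>x. pi_w c x * (cmod (f x))\<^sup>2) summable_on UNIV}"

definition l2norm :: "('a \<Rightarrow> 'a \<Rightarrow> real) \<Rightarrow> ('a \<Rightarrow> complex) \<Rightarrow> real" where
  "l2norm c f = sqrt (infsum (\<lambda>x. pi_w c x * (cmod (f x))\<^sup>2) UNIV)"

text \<open>Resolvent set: z such that (Delta - z) has a bounded two-sided inverse on L2.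
  (Since pi > 0 everywhere, equality in L2 is pointwise equality.)\<close>
definition resolvent_set :: "('a \<Rightarrow> 'a \<Rightarrow> real) \<Rightarrow> complex set" where
  "resolvent_set c = {z. \<exists>S. (\<forall>f\<in>l2 c. S f \<in> l2 c)
      \<and> (\<exists>B. \<forall>f\<in>l2 c. l2norm c (S f) \<le> B * l2norm c f)
      \<and> (\<forall>f\<in>l2 c. S (\<lambda>x. lap c f x - z * f x) = f)
      \<and> (\<forall>f\<in>l2 c. (\<lambda>x. lap c (S f) x - z * S f x) = f)}"

definition lap_spectrum :: "('a \<Rightarrow> 'a \<Rightarrow> real) \<Rightarrow> complex set" where
  "lap_spectrum c = - resolvent_set c"

text \<open>Bottom of the spectrum (the spectrum is a subset of the reals).\<close>
definition lambda_min :: "('a \<Rightarrow> 'a \<Rightarrow> real) \<Rightarrow> real" where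
  "lambda_min c = Inf {t::real. complex_of_real t \<in> lap_spectrum c}"

text \<open>lam 1 <= ... <= lam |Omega| are the eigenvalues with multiplicity of the compression
  Delta_Omega, whose matrix w.r.t. an enumeration e of Omega has entries
  delta_xy - P(x,y): its characteristic polynomial equals prod (X - lam i).\<close>
definition dirichlet_eigenvalues ::
  "('a \<Rightarrow> 'a \<Rightarrow> real) \<Rightarrow> 'a set \<Rightarrow> (nat \<Rightarrow> real) \<Rightarrow> bool" where
  "dirichlet_eigenvalues c \<Omega> lam \<longleftrightarrow>
     (\<forall>i j. 1 \<le> i \<longrightarrow> i \<le> j \<longrightarrow> j \<le> card \<Omega> \<longrightarrow> lam i \<le> lam j) \<and>
     (\<exists>e. bij_betw e {0..<card \<Omega>} \<Omega> \<and>
        char_poly (mat (card \<Omega>) (card \<Omega>)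
           (\<lambda>(i,j). (if i = j then 1 else 0) - trans_P c (e i) (e j)))
        = (\<Prod>i\<in>{1..card \<Omega>}. [:- lam i, 1:]))"

definition yang_type :: "('a::countable \<Rightarrow> 'a \<Rightarrow> real) \<Rightarrow> real \<Rightarrow> bool" where
  "yang_type c C \<longleftrightarrow> (\<forall>\<Omega> lam k. finite \<Omega> \<longrightarrow> dirichlet_eigenvalues c \<Omega> lam \<longrightarrow> k < card \<Omega> \<longrightarrow>
      (\<Sum>i=1..k. (lam (k+1) - lam i)\<^sup>2 * (1 - lam i))
        \<le> C * (\<Sum>i=1..k. (lam (k+1) - lam i) * (lam i - lambda_min c)))"

end

theory Submission
  imports Defs
begin

lemma sinh_super:
  fixes b y :: real
  assumes "b \<ge> 1" "y \<ge> 0"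
  shows "b * (exp y - exp (-y)) \<le> exp (b*y) - exp (-(b*y))"
proof -
  define g where "g = (\<lambda>z::real. exp (b*z) - exp (-(b*z)) - b * (exp z - exp (-z)))"
  have "g 0 \<le> g y"
  proof (rule DERIV_nonneg_imp_nondecreasing[OF assms(2)])
    fix z :: real assume z: "0 \<le> z" "z \<le> y"
    have d: "(g has_real_derivative (b * exp (b*z) + b * exp (-(b*z)) - b * (exp z + exp (-z)))) (at z)"
      unfolding g_def by (auto intro!: derivative_eq_intros simp: algebra_simps)
    have A: "exp z \<le> exp (b*z)" using z assms by (simp add: mult_le_cancel_right1)
    have B: "1 \<le> exp z" using z by simp
    have "exp (b*z) + exp (-(b*z)) - (exp z + exp (-z)) = (exp (b*z) - exp z) * (1 - 1/(exp (b*z) * exp z))"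
      by (simp add: exp_minus field_simps)
    also have "\<dots> \<ge> 0"
    proof (rule mult_nonneg_nonneg)
      show "0 \<le> exp (b*z) - exp z" using A by simp
      have "1 \<le> exp (b*z) * exp z" using A B by (metis mult_mono zero_le_one mult_1_left order_trans)
      then show "0 \<le> 1 - 1/(exp (b*z) * exp z)" by simp
    qed
    finally have "0 \<le> exp (b*z) + exp (-(b*z)) - (exp z + exp (-z))" .
    then have "0 \<le> b * (exp (b*z) + exp (-(b*z)) - (exp z + exp (-z)))"
      using assms by simp
    then have "0 \<le> b * exp (b*z) + b * exp (-(b*z)) - b * (exp z + exp (-z))"
      by (simp add: algebra_simps)
    then show "\<exists>y. (g has_real_derivative y) (at z) \<and> 0 \<le> y" using d by blast
  qed
  then show ?thesis unfolding g_def by simp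
qed


lemma key_ineq:
  fixes j p :: real
  assumes j: "j > 0" and p: "p \<ge> 0"
  shows "(1+p) * (1+1/j) powr (p/2) \<le> (j+1) * (1+1/j) powr p - j"
proof -
  define u where "u = 1 + 1/j"
  have u1: "u > 1" using j unfolding u_def by simp
  define y where "y = ln u / 2"
  have y0: "y \<ge> 0" using u1 unfolding y_def by simp
  define b where "b = 1 + p"
  have b1: "b \<ge> 1" using p unfolding b_def by simp
  define E where "E = exp y"
  have E0: "E > 0" unfolding E_def by simp
  have uE: "u = E^2" unfolding E_def y_def using u1
    by (simp add: power2_eq_square exp_add[symmetric])
  have up: "u powr p = exp (2*p*y)" unfolding y_def using u1 by (simp add: powr_def)
  have up2: "u powr (p/2) = exp (p*y)" unfolding y_def using u1 by (simp add: powr_def)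
  have sh: "b * (exp y - exp (-y)) \<le> exp (b*y) - exp (-(b*y))"
    by (rule sinh_super[OF b1 y0])
  have "b * (exp y - exp (-y)) * exp (b*y) \<le> (exp (b*y) - exp (-(b*y))) * exp (b*y)"
    using sh by (simp add: mult_right_mono)
  also have "\<dots> = exp (2*b*y) - 1"
    by (simp add: algebra_simps exp_add[symmetric] exp_minus_inverse)
  finally have i1: "b * (exp y - exp (-y)) * exp (b*y) \<le> exp (2*b*y) - 1" .
  have ebE: "exp (b*y) = E * exp (p*y)" unfolding b_def E_def by (simp add: distrib_right exp_add)
  have emE: "exp (-y) = 1/E" unfolding E_def by (simp add: exp_minus field_simps)
  have e1: "b * (exp y - exp (-y)) * exp (b*y) = b * exp (p*y) * (u - 1)"
    unfolding ebE emE uE using E0 by (simp add: field_simps power2_eq_square E_def)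
  have u2: "u = exp (2*y)" unfolding uE E_def by (simp add: power2_eq_square exp_add[symmetric])
  have e2: "exp (2*b*y) = u * u powr p"
    unfolding up unfolding u2 b_def by (simp add: exp_add[symmetric] algebra_simps)
  have main: "b * u powr (p/2) * (u - 1) \<le> u * u powr p - 1"
    using i1 e1 e2 up2 by simp
  have ju: "j * (u - 1) = 1" "(j+1) * (u - 1) = u" using j unfolding u_def by (auto simp: field_simps)
  have "b * u powr (p/2) * (u - 1) * j \<le> (u * u powr p - 1) * j"
    using main j by (simp add: mult_right_mono)
  also have "(u * u powr p - 1) * j = (j+1) * u powr p - j"
  proof -
    have ju2: "j*u = j+1" using ju(1) by (simp add: algebra_simps)
    have "(u * u powr p - 1) * j = (j*u) * u powr p - j" by (simp add: algebra_simps)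
    also have "\<dots> = (j+1) * u powr p - j" using ju2 by simp
    finally show ?thesis .
  qed
  finally have "b * u powr (p/2) * (j * (u - 1)) \<le> (j+1) * u powr p - j"
    by (simp add: algebra_simps)
  then show ?thesis using ju unfolding b_def u_def by simp
qed

lemma cy_step:
  fixes j a S Q x r :: real
  assumes j: "j \<ge> 1" and a: "a > 0" and r: "r > 0"
    and w: "(1+2*a)*r \<le> (j+1)*r^2 - j"
    and con: "j*x^2 - (2+2*a)*S*x + (1+2*a)*Q \<le> 0"
  shows "j^2 * ((1+a)*(S+x)^2 - (j+1)*(Q+x^2)) \<le> (j+1)^2 * r^2 * ((1+a)*S^2 - j*Q)"
proof -
  define L where "L = S/j"
  define T where "T = Q/j"
  define b where "b = 1+2*a"
  define q where "q = r^2"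
  define F where "F = (1+a)*L^2 - T"
  define Fp where "Fp = ((1+a)*(S+x)^2 - (j+1)*(Q+x^2))/(j+1)^2"
  define \<sigma> where "\<sigma> = (j+1)^2*q - j*(j+1)"
  define h where "h = -(j-a)*x^2 + 2*(1+a)*j*L*x - (1+a)*j*L^2"
  define G where "G = (x-(1+a)*L)^2 + a*(1+a)*L^2"
  define A where "A = \<sigma> + b*(j-a)"
  define B where "B = -2*(1+a)*(\<sigma>+b*j)"
  define C where "C = (1+a)*b*(\<sigma>+j)"
  define wv where "wv = (j+1)*q - j"
  have j0: "j > 0" using j by simp
  have b1: "b \<ge> 1" using a unfolding b_def by simp
  have wv: "wv \<ge> b * r" using w unfolding wv_def b_def q_def by simp
  have wv0: "wv \<ge> 0" using wv b1 r by (smt (verit) mult_nonneg_nonneg)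
  have \<sigma>w: "\<sigma> = (j+1)*wv" unfolding \<sigma>_def wv_def by (simp add: algebra_simps power2_eq_square)
  have \<sigma>0: "\<sigma> \<ge> 0" using \<sigma>w wv0 j0 by simp
  have "(j+1)*wv^2 \<ge> (j+1)*(b*r)^2"
    using wv b1 r j0 by (intro mult_left_mono power_mono) auto
  also have "(j+1)*(b*r)^2 = b^2*(wv + j)" unfolding wv_def q_def by (simp add: algebra_simps power2_eq_square)
  finally have "b^2*(wv + j) \<le> (j+1)*wv^2" .
  then have wq: "(j+1)*wv^2 - b^2*wv - b^2*j \<ge> 0" by (simp add: algebra_simps)
  have disc: "\<sigma>^2 - b^2*\<sigma> - b^2*j*(j+1) \<ge> 0"
  proof -
    have "\<sigma>^2 - b^2*\<sigma> - b^2*j*(j+1) = (j+1)*((j+1)*wv^2 - b^2*wv - b^2*j)"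
      unfolding \<sigma>w by (simp add: algebra_simps power2_eq_square)
    then show ?thesis using wq j0 by simp
  qed
  have \<sigma>b: "\<sigma> \<ge> b^2"
  proof (rule ccontr)
    assume "\<not> \<sigma> \<ge> b^2"
    then have "\<sigma>^2 - b^2*\<sigma> \<le> 0" using \<sigma>0 by (simp add: power2_eq_square mult_right_mono)
    moreover have "b^2*j*(j+1) > 0" using b1 j0 by simp
    ultimately show False using disc by simp
  qed
  have A0: "A > 0"
  proof -
    have "A \<ge> b^2 + b*(j-a)" unfolding A_def using \<sigma>b by simp
    also have "b^2 + b*(j-a) = b*(1+a+j)" unfolding b_def by (simp add: algebra_simps power2_eq_square)
    finally show ?thesis using b1 a j0 by (smt (verit) mult_pos_pos)
  qed
  have id2: "\<sigma>*G - b*h = A*x^2 + B*x*L + C*L^2"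
    unfolding G_def h_def A_def B_def C_def b_def by (simp add: algebra_simps power2_eq_square)
  have id3: "A*C - B^2/4 = a*(1+a)*(\<sigma>^2 - b^2*\<sigma> - b^2*j*(j+1))"
    unfolding A_def B_def C_def b_def by (simp add: algebra_simps power2_eq_square)
  have id4: "b*F - G = -(x^2 - 2*(1+a)*L*x + (1+2*a)*T)"
    unfolding F_def G_def b_def by (simp add: algebra_simps power2_eq_square)
  have Seq: "S = j*L" unfolding L_def using j0 by simp
  have Qeq: "Q = j*T" unfolding T_def using j0 by simp
  have "j*(x^2 - 2*(1+a)*L*x + (1+2*a)*T) = j*x^2 - (2+2*a)*S*x + (1+2*a)*Q"
    unfolding Seq Qeq by (simp add: algebra_simps)
  then have "j*(x^2 - 2*(1+a)*L*x + (1+2*a)*T) \<le> 0" using con by simp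
  then have "x^2 - 2*(1+a)*L*x + (1+2*a)*T \<le> 0" using j0 by (simp add: mult_le_0_iff)
  then have bFG: "b*F - G \<ge> 0" using id4 by simp
  have "A*(A*x^2 + B*x*L + C*L^2) = (A*x + B*L/2)^2 + (A*C - B^2/4)*L^2"
    by (simp add: algebra_simps power2_eq_square)
  moreover have "(A*C - B^2/4)*L^2 \<ge> 0" using id3 disc a by simp
  ultimately have "A*(A*x^2 + B*x*L + C*L^2) \<ge> 0" by simp
  then have qf: "\<sigma>*G - b*h \<ge> 0" using id2 A0 by (simp add: zero_le_mult_iff)
  have "b*(\<sigma>*F - h) = \<sigma>*(b*F - G) + (\<sigma>*G - b*h)" by (simp add: algebra_simps)
  also have "\<dots> \<ge> 0" using \<sigma>0 bFG qf by simp
  finally have "\<sigma>*F - h \<ge> 0" using b1 by (simp add: zero_le_mult_iff)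
  have H1: "(1+a)*(S+x)^2 - (j+1)*(Q+x^2) = j*(j+1)*F + h"
    unfolding Seq Qeq F_def h_def by (simp add: algebra_simps power2_eq_square)
  have H2: "(1+a)*S^2 - j*Q = j^2*F"
    unfolding Seq Qeq F_def by (simp add: algebra_simps power2_eq_square)
  have H3: "(j+1)^2*r^2*(j^2*F) - j^2*(j*(j+1)*F + h) = j^2*(\<sigma>*F - h)"
    unfolding \<sigma>_def q_def by (simp add: algebra_simps power2_eq_square)
  have "j^2*(\<sigma>*F - h) \<ge> 0" using \<open>\<sigma>*F - h \<ge> 0\<close> by simp
  then show ?thesis unfolding H1 H2 using H3 by simp
qed


lemma cy_final:
  fixes k a S Q x M :: real
  assumes k: "k > 0" and a: "a > 0" and M: "M \<ge> 0"
    and con: "k*x^2 - (2+2*a)*S*x + (1+2*a)*Q \<le> 0"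
    and H: "(1+a)*S^2 - k*Q \<le> k^2 * a * M^2"
  shows "x \<le> (1+2*a) * M"
proof -
  define L where "L = S/k"
  define T where "T = Q/k"
  have Seq: "S = k*L" unfolding L_def using k by simp
  have Qeq: "Q = k*T" unfolding T_def using k by simp
  have "k*(x^2 - 2*(1+a)*L*x + (1+2*a)*T) = k*x^2 - (2+2*a)*S*x + (1+2*a)*Q"
    unfolding Seq Qeq by (simp add: algebra_simps)
  then have "k*(x^2 - 2*(1+a)*L*x + (1+2*a)*T) \<le> 0" using con by simp
  then have c1: "x^2 - 2*(1+a)*L*x + (1+2*a)*T \<le> 0" using k by (simp add: mult_le_0_iff)
  have "k^2*((1+a)*L^2 - T) = (1+a)*S^2 - k*Q" unfolding Seq Qeq by (simp add: algebra_simps power2_eq_square)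
  then have "k^2*((1+a)*L^2 - T) \<le> k^2*(a*M^2)" using H by simp
  then have h1: "(1+a)*L^2 - T \<le> a*M^2" using k by simp
  have "(1+2*a)*((1+a)*L^2 - a*M^2) \<le> (1+2*a)*T"
    using h1 a by (intro mult_left_mono) auto
  then have c2: "x^2 - 2*(1+a)*L*x + (1+a)*(1+2*a)*L^2 \<le> (1+2*a)*a*M^2"
    using c1 by (simp add: algebra_simps)
  have "(1+2*a)*(x^2 - 2*(1+a)*L*x + (1+a)*(1+2*a)*L^2) - a*x^2 = (1+a)*(x - (1+2*a)*L)^2"
    by (simp add: algebra_simps power2_eq_square)
  moreover have "(1+a)*(x - (1+2*a)*L)^2 \<ge> 0" using a by simp
  ultimately have "a*x^2 \<le> (1+2*a)*(x^2 - 2*(1+a)*L*x + (1+a)*(1+2*a)*L^2)" by simp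
  also have "\<dots> \<le> (1+2*a)*((1+2*a)*a*M^2)" using c2 a by (intro mult_left_mono) auto
  finally have "a*x^2 \<le> a*((1+2*a)*M)^2" by (simp add: algebra_simps power2_eq_square)
  then have "x^2 \<le> ((1+2*a)*M)^2" using a by simp
  moreover have "(1+2*a)*M \<ge> 0" using a M by simp
  ultimately show ?thesis using power2_le_imp_le by (smt (verit) power2_minus)
qed

lemma sum_con_form:
  fixes \<mu> :: "nat \<Rightarrow> real" and j :: nat and x a :: real
  assumes "(\<Sum>i=1..j. (x - \<mu> i)^2) \<le> 2*a*(\<Sum>i=1..j. (x - \<mu> i) * \<mu> i)"
  shows "real j*x^2 - (2+2*a)*(\<Sum>i=1..j. \<mu> i)*x + (1+2*a)*(\<Sum>i=1..j. (\<mu> i)^2) \<le> 0"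
proof -
  have e1: "(\<Sum>i=1..j. (x - \<mu> i)^2) = real j*x^2 - 2*x*(\<Sum>i=1..j. \<mu> i) + (\<Sum>i=1..j. (\<mu> i)^2)"
    by (simp add: power2_eq_square algebra_simps sum.distrib sum_subtractf sum_distrib_left)
  have e2: "(\<Sum>i=1..j. (x - \<mu> i) * \<mu> i) = x*(\<Sum>i=1..j. \<mu> i) - (\<Sum>i=1..j. (\<mu> i)^2)"
    by (simp add: power2_eq_square algebra_simps sum.distrib sum_subtractf sum_distrib_left)
  show ?thesis using assms unfolding e1 e2 by (simp add: algebra_simps)
qed

lemma cheng_yang:
  fixes \<mu> :: "nat \<Rightarrow> real" and a :: real and k :: nat
  assumes a: "a > 0" and k: "1 \<le> k"
    and con: "\<And>j. 1 \<le> j \<Longrightarrow> j \<le> k \<Longrightarrow>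
      (\<Sum>i=1..j. (\<mu>(j+1) - \<mu> i)^2) \<le> 2*a*(\<Sum>i=1..j. (\<mu>(j+1) - \<mu> i) * \<mu> i)"
    and m1: "\<mu> 1 \<ge> 0"
  shows "\<mu>(k+1) \<le> (1+2*a) * real k powr a * \<mu> 1"
proof -
  define S where "S = (\<lambda>j. \<Sum>i=1..j. \<mu> i)"
  define Q where "Q = (\<lambda>j. \<Sum>i=1..j. (\<mu> i)^2)"
  define H where "H = (\<lambda>j::nat. (1+a)*(S j)^2 - real j * Q j)"
  have con': "real j*(\<mu>(j+1))^2 - (2+2*a)*S j*\<mu>(j+1) + (1+2*a)*Q j \<le> 0"
    if "1 \<le> j" "j \<le> k" for j
    using sum_con_form[OF con[OF that]] unfolding S_def Q_def by simp
  have Hb: "H j \<le> real j powr (2*a+2) * (a * (\<mu> 1)^2)" if "1 \<le> j" "j \<le> k" for j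
    using that
  proof (induction j rule: dec_induct)
    case base
    show ?case unfolding H_def S_def Q_def by (simp add: algebra_simps)
  next
    case (step j)
    have j1: "real j \<ge> 1" using step by simp
    have jk: "j \<le> k" using step by simp
    define r where "r = (1 + 1/real j) powr a"
    have "1/real j \<ge> 0" by simp
    then have u0: "1 + 1/real j > 0" by linarith
    have r0: "r > 0" unfolding r_def using u0 by simp
    have r2: "r^2 = (1 + 1/real j) powr (2*a)"
      unfolding r_def using j1 by (simp add: powr_powr[symmetric] power2_eq_square powr_add[symmetric])
    have w: "(1+2*a)*r \<le> (real j+1)*r^2 - real j"
    proof -
      have kk: "(1+2*a)*(1+1/real j) powr a \<le> (real j+1)*(1+1/real j) powr (2*a) - real j"
        using key_ineq[of "real j" "2*a"] j1 a by simp
      show ?thesis using kk[folded r2, folded r_def] .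
    qed
    have st: "(real j)^2 * ((1+a)*(S j + \<mu>(j+1))^2 - (real j+1)*(Q j + (\<mu>(j+1))^2))
        \<le> (real j+1)^2 * r^2 * ((1+a)*(S j)^2 - real j*Q j)"
      by (rule cy_step[OF j1 a r0 w con'[OF step(1) jk]])
    have SS: "S (Suc j) = S j + \<mu>(j+1)" "Q (Suc j) = Q j + (\<mu>(j+1))^2"
      unfolding S_def Q_def using step by auto
    have HS: "H (Suc j) = (1+a)*(S j + \<mu>(j+1))^2 - (real j+1)*(Q j + (\<mu>(j+1))^2)"
      unfolding H_def SS by simp
    have "(real j)^2 * H (Suc j) \<le> (real j+1)^2 * r^2 * H j"
      unfolding HS using st by (simp add: H_def)
    also have "\<dots> \<le> (real j+1)^2 * r^2 * (real j powr (2*a+2) * (a * (\<mu> 1)^2))"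
      using step.IH jk by (intro mult_left_mono) auto
    also have "\<dots> = (real j)^2 * (real (Suc j) powr (2*a+2) * (a * (\<mu> 1)^2))"
    proof -
      have "r^2 * real j powr (2*a+2) = (real j)^2 * (real j + 1) powr (2*a)"
      proof -
        have "1 + 1/real j = (real j + 1)/real j" using j1 by (simp add: field_simps)
        then have "r^2 = (real j + 1) powr (2*a) / real j powr (2*a)"
          unfolding r2 using j1 by (simp add: powr_divide)
        moreover have "real j powr (2*a+2) = real j powr (2*a) * (real j)^2"
          using j1 by (simp add: powr_add powr_realpow)
        ultimately show ?thesis using j1 by simp
      qed
      moreover have "real (Suc j) powr (2*a+2) = (real j + 1) powr (2*a) * (real j + 1)^2"
        using j1 by (simp add: powr_add powr_realpow add.commute)
      ultimately show ?thesis by (simp add: algebra_simps)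
    qed
    finally show ?case using j1 by simp
  qed
  have fin: "\<mu>(k+1) \<le> (1+2*a) * (real k powr a * \<mu> 1)"
  proof (rule cy_final[where k="real k" and a=a and S="S k" and Q="Q k" and x="\<mu>(k+1)" and M="real k powr a * \<mu> 1"])
    show "real k > 0" using k by simp
    show "a > 0" by (rule a)
    show "real k powr a * \<mu> 1 \<ge> 0" using m1 by simp
    show "real k*(\<mu>(k+1))^2 - (2+2*a)*S k*\<mu>(k+1) + (1+2*a)*Q k \<le> 0" using con'[OF k order.refl] .
    have "H k \<le> real k powr (2*a+2) * (a * (\<mu> 1)^2)" using Hb[OF k order.refl] .
    moreover have "real k powr (2*a+2) * (a * (\<mu> 1)^2) = (real k)^2 * a * (real k powr a * \<mu> 1)^2"
    proof -
      have k0: "real k > 0" using k by simp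
      have e1: "real k powr (2*a+2) = real k powr (2*a) * (real k)^2"
        using k0 by (simp add: powr_add powr_realpow)
      have e2: "(real k powr a * \<mu> 1)^2 = real k powr (2*a) * (\<mu> 1)^2"
        by (simp add: power_mult_distrib power2_eq_square powr_add[symmetric])
      show ?thesis unfolding e1 e2 by (simp add: algebra_simps)
    qed
    ultimately have "H k \<le> (real k)^2 * a * (real k powr a * \<mu> 1)^2" by linarith
    then show "(1+a)*(S k)^2 - real k*Q k \<le> (real k)^2 * a * (real k powr a * \<mu> 1)^2"
      by (simp only: H_def)
  qed
  then show ?thesis by (simp add: algebra_simps)
qed


lemma abs_dom_summable:
  fixes f :: "'a \<Rightarrow> real"
  assumes "g summable_on A" "\<And>x. x \<in> A \<Longrightarrow> \<bar>f x\<bar> \<le> g x"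
  shows "f summable_on A"
proof -
  have "(\<lambda>x. norm (f x)) summable_on A"
    by (rule Infinite_Sum.abs_summable_on_comparison_test'[OF assms(1)]) (use assms(2) in auto)
  then show ?thesis using summable_on_iff_abs_summable_on_real by blast
qed

lemma nonneg_dom_summable:
  fixes f :: "'a \<Rightarrow> real"
  assumes "g summable_on A" "\<And>x. x \<in> A \<Longrightarrow> 0 \<le> f x" "\<And>x. x \<in> A \<Longrightarrow> f x \<le> g x"
  shows "f summable_on A"
  using summable_on_comparison_test[OF assms(1) assms(3) assms(2)] .

lemma nonneg_double_has_sum:
  fixes D :: "'a \<Rightarrow> 'b \<Rightarrow> real"
  assumes nn: "\<And>x y. D x y \<ge> 0"
    and rows: "\<And>y. ((\<lambda>x. D x y) has_sum s y) UNIV"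
    and ss: "s summable_on UNIV"
  shows "((\<lambda>x. infsum (D x) UNIV) has_sum (infsum s UNIV)) UNIV"
    and "\<And>x. D x summable_on UNIV"
    and "(\<lambda>(x,y). D x y) summable_on UNIV \<times> UNIV"
proof -
  define f where "f = (\<lambda>(y,x). D x y)"
  have fs: "f summable_on Sigma UNIV (\<lambda>_. UNIV)"
    by (rule summable_on_SigmaI[where g = s]) (use rows ss nn in \<open>auto simp: f_def\<close>)
  have fh: "(f has_sum (infsum s UNIV)) (Sigma UNIV (\<lambda>_. UNIV))"
    by (rule has_sum_SigmaI[where g = s]) (use rows ss fs in \<open>auto simp: f_def\<close>)
  have fh2: "((\<lambda>(x,y). D x y) has_sum (infsum s UNIV)) (UNIV \<times> UNIV)"
    using fh has_sum_swap[of f UNIV UNIV "infsum s UNIV"] by (simp add: f_def)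
  then show s2: "(\<lambda>(x,y). D x y) summable_on UNIV \<times> UNIV" by (auto simp: summable_on_def)
  show sx: "\<And>x. D x summable_on UNIV"
    using summable_on_SigmaD1[OF s2[unfolded Sigma_def[symmetric]]] by auto
  have "((\<lambda>(x,y). D x y) has_sum (infsum s UNIV)) (Sigma UNIV (\<lambda>_. UNIV))" using fh2 by simp
  then show "((\<lambda>x. infsum (D x) UNIV) has_sum (infsum s UNIV)) UNIV"
    by (rule has_sum_Sigma'[where f = "\<lambda>(x,y). D x y"]) (use sx in auto)
qed

lemma quad_cs:
  fixes a b c :: real
  assumes "\<And>s. 0 \<le> a - 2* s*b + s^2*c"
  shows "b^2 \<le> a*c"
proof (cases "c = 0")
  case True
  show ?thesis
  proof (rule ccontr)
    assume "\<not> ?thesis"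
    then have "b \<noteq> 0" using True by simp
    have "0 \<le> a - 2*((a+1)/(2*b))*b" using assms[of "(a+1)/(2*b)"] True by simp
    also have "\<dots> = -1" using \<open>b \<noteq> 0\<close> by (simp add: field_simps)
    finally show False by simp
  qed
next
  case False
  have c0: "c \<ge> 0"
  proof (rule ccontr)
    assume "\<not> c \<ge> 0"
    then have cn: "c < 0" by simp
    define s where "s = (\<bar>a\<bar> + 2*\<bar>b\<bar> + 1)/(-c) + 1"
    have "(\<bar>a\<bar> + 2*\<bar>b\<bar> + 1)/(-c) \<ge> 0" using cn by (intro divide_nonneg_pos) auto
    then have s1: "s \<ge> 1" unfolding s_def by simp
    have "s*(-c) \<ge> \<bar>a\<bar> + 2*\<bar>b\<bar> + 1"
      unfolding s_def using cn by (simp add: field_simps)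
    then have "s*(s*(-c)) \<ge> s*(\<bar>a\<bar> + 2*\<bar>b\<bar> + 1)" using s1
      by (intro mult_left_mono) auto
    then have "s^2*(-c) \<ge> s*(\<bar>a\<bar> + 2*\<bar>b\<bar> + 1)" by (simp add: power2_eq_square algebra_simps)
    moreover have "s*(\<bar>a\<bar> + 2*\<bar>b\<bar> + 1) \<ge> \<bar>a\<bar> + 2* s*\<bar>b\<bar> + 1"
    proof -
      have "s*\<bar>a\<bar> \<ge> \<bar>a\<bar>" "s*1 \<ge> 1" using s1 by (auto intro: mult_right_mono[of 1 s, simplified])
      then show ?thesis by (simp add: algebra_simps)
    qed
    moreover have "a - 2* s*b \<le> \<bar>a\<bar> + 2* s*\<bar>b\<bar>"
    proof -
      have "s*(-b) \<le> s*\<bar>b\<bar>" by (rule mult_left_mono) (use s1 in auto)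
      then have "-(s*b) \<le> s*\<bar>b\<bar>" by simp
      moreover have "a \<le> \<bar>a\<bar>" by simp
      ultimately show ?thesis by linarith
    qed
    ultimately have "a - 2* s*b + s^2*c < 0" by simp
    then show False using assms[of s] by simp
  qed
  then have cp: "c > 0" using False by simp
  have "0 \<le> a - 2*(b/c)*b + (b/c)^2*c" using assms[of "b/c"] .
  also have "\<dots> = (a*c - b^2)/c" using cp by (simp add: field_simps power2_eq_square)
  finally show ?thesis using cp by (simp add: divide_nonneg_pos zero_le_divide_iff)
qed

lemma lin_cs:
  fixes X V W :: real
  assumes "V \<ge> 0" "W \<ge> 0" "\<And>s. s > 0 \<Longrightarrow> 2* s*\<bar>X\<bar> \<le> V + W* s^2"
  shows "X^2 \<le> V*W"
proof (cases "X = 0")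
  case True then show ?thesis using assms by simp
next
  case False
  then have ax: "\<bar>X\<bar> > 0" by simp
  show ?thesis
  proof (cases "W = 0")
    case True
    have "2*((V+1)/(2*\<bar>X\<bar>))*\<bar>X\<bar> \<le> V" using assms(3)[of "(V+1)/(2*\<bar>X\<bar>)"] ax True assms(1)
      by (simp add: divide_pos_pos)
    then have "V + 1 \<le> V" using ax by (simp add: field_simps)
    then show ?thesis by simp
  next
    case False
    then have wp: "W > 0" using assms(2) by simp
    have "2*(\<bar>X\<bar>/W)*\<bar>X\<bar> \<le> V + W*(\<bar>X\<bar>/W)^2" using assms(3)[of "\<bar>X\<bar>/W"] ax wp by simp
    then have "2*X^2/W \<le> V + X^2/W" using wp by (simp add: power2_eq_square field_simps)
    then have "X^2/W \<le> V" by simp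
    then show ?thesis using wp by (simp add: pos_divide_le_eq)
  qed
qed

lemma infsum_jensen:
  fixes w a :: "'a \<Rightarrow> real"
  assumes w0: "\<And>i. i \<in> A \<Longrightarrow> w i \<ge> 0"
    and wh: "(w has_sum W) A"
    and ws: "(\<lambda>i. w i * (a i)^2) summable_on A"
  shows "(\<lambda>i. w i * a i) summable_on A"
    and "(infsum (\<lambda>i. w i * a i) A)^2 \<le> W * infsum (\<lambda>i. w i * (a i)^2) A"
proof -
  have wsum: "w summable_on A" using wh by (auto simp: summable_on_def)
  have dom0: "(\<lambda>i. w i + w i * (a i)^2) summable_on A" by (rule summable_on_add[OF wsum ws])
  have dom: "(\<lambda>i. (w i + w i * (a i)^2)/2) summable_on A"
    using summable_on_cmult_left[OF dom0, of "1/2"] by simp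
  show sa: "(\<lambda>i. w i * a i) summable_on A"
  proof (rule abs_dom_summable[OF dom])
    fix i assume i: "i \<in> A"
    have "0 \<le> (\<bar>a i\<bar> - 1)^2" by simp
    moreover have "(\<bar>a i\<bar> - 1)^2 = (a i)^2 - 2*\<bar>a i\<bar> + 1"
      by (simp add: power2_diff power2_abs)
    ultimately have "2*\<bar>a i\<bar> \<le> 1 + (a i)^2" by linarith
    then have "\<bar>a i\<bar> \<le> (1 + (a i)^2)/2" by simp
    then have "w i * \<bar>a i\<bar> \<le> w i * ((1 + (a i)^2)/2)" by (rule mult_left_mono[OF _ w0[OF i]])
    moreover have "\<bar>w i * a i\<bar> = w i * \<bar>a i\<bar>" using w0[OF i] by (simp add: abs_mult)
    moreover have "w i * ((1 + (a i)^2)/2) = (w i + w i * (a i)^2)/2" by (simp add: distrib_left)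
    ultimately show "\<bar>w i * a i\<bar> \<le> (w i + w i * (a i)^2)/2" by simp
  qed
  define X where "X = infsum (\<lambda>i. w i * a i) A"
  define V where "V = infsum (\<lambda>i. w i * (a i)^2) A"
  have W0: "W \<ge> 0" by (rule has_sum_nonneg[OF wh w0])
  have V0: "V \<ge> 0" unfolding V_def by (rule infsum_nonneg) (use w0 in simp)
  have "2* s*\<bar>X\<bar> \<le> V + W* s^2" if s: "s > 0" for s
  proof -
    have sq0: "(\<lambda>i. w i * (a i)^2 + w i * s^2) summable_on A"
      by (rule summable_on_add[OF ws summable_on_cmult_left[OF wsum]])
    have sq: "(\<lambda>i. w i * ((a i)^2 + s^2)) summable_on A"
      using sq0 by (simp add: distrib_left)
    have isq: "infsum (\<lambda>i. w i * ((a i)^2 + s^2)) A = V + W* s^2"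
    proof -
      have "infsum (\<lambda>i. w i * ((a i)^2 + s^2)) A = infsum (\<lambda>i. w i * (a i)^2 + w i * s^2) A"
        by (simp add: distrib_left)
      also have "\<dots> = V + infsum (\<lambda>i. w i * s^2) A"
        unfolding V_def by (rule infsum_add[OF ws summable_on_cmult_left[OF wsum]])
      also have "infsum (\<lambda>i. w i * s^2) A = W * s^2"
        using infsum_cmult_left'[of w "s^2" A] infsumI[OF wh] by simp
      finally show ?thesis .
    qed
    have "infsum (\<lambda>i. 2* s*(w i * a i)) A \<le> infsum (\<lambda>i. w i * ((a i)^2 + s^2)) A"
    proof (rule infsum_mono)
      show "(\<lambda>i. 2* s*(w i * a i)) summable_on A" by (rule summable_on_cmult_right[OF sa])
      show "(\<lambda>i. w i * ((a i)^2 + s^2)) summable_on A" by (rule sq)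
      fix i assume i: "i \<in> A"
      have "0 \<le> (a i - s)^2" by simp
      moreover have "(a i - s)^2 = (a i)^2 - 2* s*a i + s^2" by (simp add: power2_diff)
      ultimately have "2* s*a i \<le> (a i)^2 + s^2" by linarith
      then have "w i * (2* s*a i) \<le> w i * ((a i)^2 + s^2)" using w0[OF i] by (rule mult_left_mono)
      then show "2* s*(w i * a i) \<le> w i * ((a i)^2 + s^2)" by (simp add: algebra_simps)
    qed
    moreover have "infsum (\<lambda>i. 2* s*(w i * a i)) A = 2* s*X" unfolding X_def by (rule infsum_cmult_right')
    ultimately have l1: "2* s*X \<le> V + W* s^2" using isq by simp
    have "infsum (\<lambda>i. -(2* s*(w i * a i))) A \<le> infsum (\<lambda>i. w i * ((a i)^2 + s^2)) A"
    proof (rule infsum_mono)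
      show "(\<lambda>i. -(2* s*(w i * a i))) summable_on A"
        unfolding summable_on_uminus by (rule summable_on_cmult_right[OF sa])
      show "(\<lambda>i. w i * ((a i)^2 + s^2)) summable_on A" by (rule sq)
      fix i assume i: "i \<in> A"
      have "0 \<le> (a i + s)^2" by simp
      moreover have "(a i + s)^2 = (a i)^2 + 2* s*a i + s^2" by (simp add: power2_sum)
      ultimately have "-(2* s*a i) \<le> (a i)^2 + s^2" by linarith
      then have "w i * (-(2* s*a i)) \<le> w i * ((a i)^2 + s^2)" using w0[OF i] by (rule mult_left_mono)
      then show "-(2* s*(w i * a i)) \<le> w i * ((a i)^2 + s^2)" by (simp add: algebra_simps)
    qed
    moreover have "infsum (\<lambda>i. -(2* s*(w i * a i))) A = -(2* s*X)"
      unfolding X_def by (simp add: infsum_uminus infsum_cmult_right')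
    ultimately have l2: "-(2* s*X) \<le> V + W* s^2" using isq by simp
    show ?thesis
    proof (cases "X \<ge> 0")
      case True then show ?thesis using l1 by simp
    next
      case False then have "\<bar>X\<bar> = -X" by simp
      then show ?thesis using l2 by simp
    qed
  qed
  then have "X^2 \<le> V*W" by (intro lin_cs V0 W0)
  then show "(infsum (\<lambda>i. w i * a i) A)^2 \<le> W * infsum (\<lambda>i. w i * (a i)^2) A"
    unfolding X_def V_def by (simp add: mult.commute)
qed


lemma summable_on_diff':
  fixes f g :: "'a \<Rightarrow> 'b::{topological_ab_group_add}"
  assumes "f summable_on A" "g summable_on A"
  shows "(\<lambda>x. f x - g x) summable_on A"
proof -
  have "(\<lambda>x. - g x) summable_on A" using assms(2) by (simp add: summable_on_uminus)
  then have "(\<lambda>x. f x + - g x) summable_on A" by (rule summable_on_add[OF assms(1)])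
  then show ?thesis by simp
qed

lemma infsum_diff':
  fixes f g :: "'a \<Rightarrow> 'b::{topological_ab_group_add, t2_space}"
  assumes "f summable_on A" "g summable_on A"
  shows "infsum (\<lambda>x. f x - g x) A = infsum f A - infsum g A"
proof -
  have gs: "(\<lambda>x. - g x) summable_on A" using assms(2) by (simp add: summable_on_uminus)
  have "infsum (\<lambda>x. f x + - g x) A = infsum f A + infsum (\<lambda>x. - g x) A"
    by (rule infsum_add[OF assms(1) gs])
  then show ?thesis by (simp add: infsum_uminus)
qed

locale netw =
  fixes c :: "'a::countable \<Rightarrow> 'a \<Rightarrow> real"
  assumes net: "network c"
begin

abbreviation "pw \<equiv> pi_w c"
abbreviation "P \<equiv> trans_P c"

lemma c_nonneg: "0 \<le> c x y" using net unfolding network_def by blast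
lemma c_sym: "c x y = c y x" using net unfolding network_def by blast
lemma c_summ: "c x summable_on UNIV" using net unfolding network_def by blast
lemma pw_pos: "0 < pw x" using net unfolding network_def by blast
lemma c_has: "(c x has_sum pw x) UNIV" unfolding pi_w_def using c_summ by simp

lemma c_le: "c x y \<le> pw x"
proof -
  have "sum (c x) {y} \<le> infsum (c x) UNIV"
    by (rule finite_sum_le_infsum[OF c_summ]) (auto simp: c_nonneg)
  then show ?thesis unfolding pi_w_def by simp
qed

lemma c_le2: "c x y \<le> pw y" using c_le[of y x] c_sym by simp

lemma P_nonneg: "0 \<le> P x y" unfolding trans_P_def using c_nonneg pw_pos by (simp add: less_imp_le)

lemma pw_P: "pw x * P x y = c x y" unfolding trans_P_def using pw_pos[of x] by simp

lemma P_has: "(P x has_sum 1) UNIV"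
proof -
  have "((\<lambda>y. c x y * (1/pw x)) has_sum (pw x * (1/pw x))) UNIV"
    by (rule has_sum_cmult_left[OF c_has])
  then show ?thesis using pw_pos[of x] unfolding trans_P_def by (simp add: divide_inverse)
qed

lemma P_summ: "P x summable_on UNIV" using P_has by (auto simp: summable_on_def)

definition R2 :: "('a \<Rightarrow> real) \<Rightarrow> bool" where
  "R2 g \<longleftrightarrow> (\<lambda>x. pw x * (g x)^2) summable_on UNIV"
definition nn :: "('a \<Rightarrow> real) \<Rightarrow> real" where
  "nn g = infsum (\<lambda>x. pw x * (g x)^2) UNIV"
definition ip :: "('a \<Rightarrow> real) \<Rightarrow> ('a \<Rightarrow> real) \<Rightarrow> real" where
  "ip g h = infsum (\<lambda>x. pw x * g x * h x) UNIV"
definition Pop :: "('a \<Rightarrow> real) \<Rightarrow> 'a \<Rightarrow> real" where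
  "Pop g = (\<lambda>x. infsum (\<lambda>y. P x y * g y) UNIV)"
definition Lr :: "('a \<Rightarrow> real) \<Rightarrow> 'a \<Rightarrow> real" where
  "Lr g = (\<lambda>x. g x - Pop g x)"

lemma nn_nonneg: "nn g \<ge> 0"
  unfolding nn_def by (rule infsum_nonneg) (simp add: pw_pos less_imp_le)

lemma pt_le: assumes "R2 g" shows "pw x * (g x)^2 \<le> nn g"
proof -
  have "sum (\<lambda>x. pw x * (g x)^2) {x} \<le> infsum (\<lambda>x. pw x * (g x)^2) UNIV"
    by (rule finite_sum_le_infsum[OF assms[unfolded R2_def]]) (auto simp: pw_pos less_imp_le)
  then show ?thesis unfolding nn_def by simp
qed

lemma nn_zero: assumes "R2 g" "nn g = 0" shows "g x = 0"
proof -
  have "pw x * (g x)^2 \<le> 0" using pt_le[OF assms(1), of x] assms(2) by simp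
  then have "(g x)^2 \<le> 0" using pw_pos[of x] by (simp add: mult_le_0_iff)
  then show ?thesis by simp
qed

lemma R2_0: "R2 (\<lambda>x. 0)" unfolding R2_def by simp

lemma R2_scale: assumes "R2 g" shows "R2 (\<lambda>x. s * g x)"
proof -
  have "(\<lambda>x. s^2 * (pw x * (g x)^2)) summable_on UNIV"
    by (rule summable_on_cmult_right[OF assms[unfolded R2_def]])
  then show ?thesis unfolding R2_def by (simp add: power_mult_distrib algebra_simps)
qed

lemma R2_add: assumes "R2 g" "R2 h" shows "R2 (\<lambda>x. g x + h x)"
proof -
  have s: "(\<lambda>x. 2 * (pw x * (g x)^2) + 2 * (pw x * (h x)^2)) summable_on UNIV"
    by (intro summable_on_add summable_on_cmult_right assms[unfolded R2_def])
  show ?thesis unfolding R2_def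
  proof (rule nonneg_dom_summable[OF s])
    fix x
    show "0 \<le> pw x * (g x + h x)^2" using pw_pos[of x] by simp
    have "(g x + h x)^2 \<le> 2*(g x)^2 + 2*(h x)^2"
    proof -
      have "0 \<le> (g x - h x)^2" by simp
      then show ?thesis by (simp add: power2_sum power2_diff)
    qed
    then have "pw x * (g x + h x)^2 \<le> pw x * (2*(g x)^2 + 2*(h x)^2)"
      by (rule mult_left_mono) (use pw_pos[of x] in simp)
    then show "pw x * (g x + h x)^2 \<le> 2 * (pw x * (g x)^2) + 2 * (pw x * (h x)^2)"
      by (simp add: algebra_simps)
  qed
qed

lemma R2_diff: assumes "R2 g" "R2 h" shows "R2 (\<lambda>x. g x - h x)"
  using R2_add[OF assms(1) R2_scale[OF assms(2), of "-1"]] by simp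

lemma R2_lin: assumes "R2 g" "R2 h" shows "R2 (\<lambda>x. g x - s * h x)"
  using R2_diff[OF assms(1) R2_scale[OF assms(2)]] by simp

lemma ip_summ: assumes "R2 g" "R2 h" shows "(\<lambda>x. pw x * g x * h x) summable_on UNIV"
proof -
  have s: "(\<lambda>x. (pw x * (g x)^2 + pw x * (h x)^2)/2) summable_on UNIV"
    using summable_on_cmult_left[OF summable_on_add[OF assms[unfolded R2_def]], of "1/2"] by simp
  show ?thesis
  proof (rule abs_dom_summable[OF s])
    fix x
    have "0 \<le> (\<bar>g x\<bar> - \<bar>h x\<bar>)^2" by simp
    then have "2 * \<bar>g x * h x\<bar> \<le> (g x)^2 + (h x)^2"
      by (simp add: power2_diff abs_mult power2_abs)
    then have "pw x * (2 * \<bar>g x * h x\<bar>) \<le> pw x * ((g x)^2 + (h x)^2)"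
      by (rule mult_left_mono) (use pw_pos[of x] in simp)
    moreover have "\<bar>pw x * g x * h x\<bar> = pw x * \<bar>g x * h x\<bar>"
      using pw_pos[of x] by (simp add: abs_mult)
    ultimately show "\<bar>pw x * g x * h x\<bar> \<le> (pw x * (g x)^2 + pw x * (h x)^2)/2"
      by (simp add: algebra_simps)
  qed
qed

lemma ip_sym: "ip g h = ip h g" unfolding ip_def by (simp add: algebra_simps)

lemma ip_self: "ip g g = nn g" unfolding ip_def nn_def by (simp add: power2_eq_square algebra_simps)

lemma ip_diff_left: assumes "R2 g1" "R2 g2" "R2 h"
  shows "ip (\<lambda>x. g1 x - g2 x) h = ip g1 h - ip g2 h"
proof -
  have "ip (\<lambda>x. g1 x - g2 x) h = infsum (\<lambda>x. pw x * g1 x * h x - pw x * g2 x * h x) UNIV"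
    unfolding ip_def by (simp add: algebra_simps)
  also have "\<dots> = ip g1 h - ip g2 h"
    unfolding ip_def by (rule infsum_diff'[OF ip_summ[OF assms(1,3)] ip_summ[OF assms(2,3)]])
  finally show ?thesis .
qed

lemma ip_scale_left: "ip (\<lambda>x. s * g x) h = s * ip g h"
proof -
  have "ip (\<lambda>x. s * g x) h = infsum (\<lambda>x. s * (pw x * g x * h x)) UNIV"
    unfolding ip_def by (simp add: algebra_simps)
  also have "\<dots> = s * ip g h" unfolding ip_def by (rule infsum_cmult_right')
  finally show ?thesis .
qed

lemma ip_lin_left: assumes "R2 g1" "R2 g2" "R2 h"
  shows "ip (\<lambda>x. g1 x - s * g2 x) h = ip g1 h - s * ip g2 h"
  using ip_diff_left[OF assms(1) R2_scale[OF assms(2)] assms(3)] ip_scale_left by simp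

lemma ip_lin_right: assumes "R2 g1" "R2 g2" "R2 h"
  shows "ip h (\<lambda>x. g1 x - s * g2 x) = ip h g1 - s * ip h g2"
  using ip_lin_left[OF assms] ip_sym by metis

lemma cs_generic:
  fixes B :: "('a \<Rightarrow> real) \<Rightarrow> ('a \<Rightarrow> real) \<Rightarrow> real"
  assumes lin: "\<And>g1 g2 h s. R2 g1 \<Longrightarrow> R2 g2 \<Longrightarrow> R2 h \<Longrightarrow> B (\<lambda>x. g1 x - s * g2 x) h = B g1 h - s * B g2 h"
    and sym: "\<And>g h. R2 g \<Longrightarrow> R2 h \<Longrightarrow> B g h = B h g"
    and psd: "\<And>g. R2 g \<Longrightarrow> B g g \<ge> 0"
    and g: "R2 g" and h: "R2 h"
  shows "(B g h)^2 \<le> B g g * B h h"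
proof (rule quad_cs)
  fix s :: real
  have gh: "R2 (\<lambda>x. g x - s * h x)" by (rule R2_lin[OF g h])
  have "B (\<lambda>x. g x - s * h x) (\<lambda>x. g x - s * h x)
      = B g (\<lambda>x. g x - s * h x) - s * B h (\<lambda>x. g x - s * h x)"
    by (rule lin[OF g h gh])
  also have "B g (\<lambda>x. g x - s * h x) = B g g - s * B g h"
    using sym[OF g gh] sym[OF g g] sym[OF h g] lin[OF g h g, of s] by simp
  also have "B h (\<lambda>x. g x - s * h x) = B h g - s * B h h"
    using sym[OF h gh] lin[OF g h h, of s] sym[OF g h] by simp
  finally have "B (\<lambda>x. g x - s * h x) (\<lambda>x. g x - s * h x) = B g g - 2 * s * B g h + s^2 * B h h"
    using sym[OF g h] by (simp add: algebra_simps power2_eq_square)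
  then show "0 \<le> B g g - 2 * s * B g h + s^2 * B h h" using psd[OF gh] by simp
qed

lemma ip_cs: assumes "R2 g" "R2 h" shows "(ip g h)^2 \<le> nn g * nn h"
proof -
  have "(ip g h)^2 \<le> ip g g * ip h h"
  proof (rule cs_generic[where B = ip, OF _ _ _ assms])
    show "\<And>g1 g2 h s. R2 g1 \<Longrightarrow> R2 g2 \<Longrightarrow> R2 h \<Longrightarrow> ip (\<lambda>x. g1 x - s * g2 x) h = ip g1 h - s * ip g2 h"
      by (rule ip_lin_left)
    show "\<And>g h. R2 g \<Longrightarrow> R2 h \<Longrightarrow> ip g h = ip h g" by (rule ip_sym)
    show "\<And>g. R2 g \<Longrightarrow> ip g g \<ge> 0" by (simp add: ip_self nn_nonneg)
  qed
  then show ?thesis by (simp add: ip_self)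
qed

end


context netw begin

lemma Pg2_summ: assumes "R2 g" shows "(\<lambda>y. P x y * (g y)^2) summable_on UNIV"
proof (rule nonneg_dom_summable)
  show "(\<lambda>y. pw y * (g y)^2 * (1/pw x)) summable_on UNIV"
    by (rule summable_on_cmult_left[OF assms[unfolded R2_def]])
  fix y
  show "0 \<le> P x y * (g y)^2" using P_nonneg by simp
  have "c x y * (g y)^2 \<le> pw y * (g y)^2" using c_le2 by (simp add: mult_right_mono)
  then have "c x y * (g y)^2 / pw x \<le> pw y * (g y)^2 / pw x"
    using pw_pos[of x] by (simp add: divide_right_mono)
  then show "P x y * (g y)^2 \<le> pw y * (g y)^2 * (1/pw x)" unfolding trans_P_def by simp
qed

lemma Pop_summ: assumes "R2 g" shows "(\<lambda>y. P x y * g y) summable_on UNIV"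
  using infsum_jensen(1)[OF _ P_has Pg2_summ[OF assms]] P_nonneg by blast

lemma Pop_sq: assumes "R2 g" shows "(Pop g x)^2 \<le> infsum (\<lambda>y. P x y * (g y)^2) UNIV"
  using infsum_jensen(2)[OF _ P_has Pg2_summ[OF assms]] P_nonneg unfolding Pop_def by simp

lemma double1: assumes "R2 g"
  shows "((\<lambda>x. infsum (\<lambda>y. c x y * (g y)^2) UNIV) has_sum nn g) UNIV"
    and "(\<lambda>(x,y). c x y * (g y)^2) summable_on UNIV \<times> UNIV"
proof -
  have rows: "((\<lambda>x. c x y * (g y)^2) has_sum (pw y * (g y)^2)) UNIV" for y
  proof -
    have "((\<lambda>x. c y x * (g y)^2) has_sum (pw y * (g y)^2)) UNIV"
      by (rule has_sum_cmult_left[OF c_has])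
    then show ?thesis using c_sym by simp
  qed
  note d = nonneg_double_has_sum[where D = "\<lambda>x y. c x y * (g y)^2", OF _ rows assms[unfolded R2_def]]
  show "((\<lambda>x. infsum (\<lambda>y. c x y * (g y)^2) UNIV) has_sum nn g) UNIV"
    using d(1) c_nonneg unfolding nn_def by simp
  show "(\<lambda>(x,y). c x y * (g y)^2) summable_on UNIV \<times> UNIV"
    using d(3) c_nonneg by simp
qed

lemma double2: assumes "R2 g"
  shows "(\<lambda>(x,y). c x y * (g x)^2) summable_on UNIV \<times> UNIV"
proof -
  have "(\<lambda>(x,y). (\<lambda>(x,y). c x y * (g y)^2) (y,x)) summable_on UNIV \<times> UNIV"
    using double1(2)[OF assms] summable_on_swap by blast
  then show ?thesis using c_sym by (simp add: case_prod_unfold)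
qed

lemma Pop2_has: assumes "R2 g"
  shows "((\<lambda>x. pw x * infsum (\<lambda>y. P x y * (g y)^2) UNIV) has_sum nn g) UNIV"
proof -
  have "pw x * infsum (\<lambda>y. P x y * (g y)^2) UNIV = infsum (\<lambda>y. c x y * (g y)^2) UNIV" for x
  proof -
    have "pw x * infsum (\<lambda>y. P x y * (g y)^2) UNIV = infsum (\<lambda>y. pw x * (P x y * (g y)^2)) UNIV"
      by (rule infsum_cmult_right'[symmetric])
    also have "\<dots> = infsum (\<lambda>y. c x y * (g y)^2) UNIV"
      by (simp add: mult.assoc[symmetric] pw_P)
    finally show ?thesis .
  qed
  then show ?thesis using double1(1)[OF assms] by simp
qed

lemma R2_Pop: assumes "R2 g" shows "R2 (Pop g)" and "nn (Pop g) \<le> nn g"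
proof -
  have le: "pw x * (Pop g x)^2 \<le> pw x * infsum (\<lambda>y. P x y * (g y)^2) UNIV" for x
    by (rule mult_left_mono[OF Pop_sq[OF assms]]) (use pw_pos[of x] in simp)
  have hs: "(\<lambda>x. pw x * infsum (\<lambda>y. P x y * (g y)^2) UNIV) summable_on UNIV"
    using Pop2_has[OF assms] by (auto simp: summable_on_def)
  show r: "R2 (Pop g)" unfolding R2_def
    by (rule nonneg_dom_summable[OF hs]) (use le pw_pos in \<open>auto simp: less_imp_le\<close>)
  have "nn (Pop g) \<le> infsum (\<lambda>x. pw x * infsum (\<lambda>y. P x y * (g y)^2) UNIV) UNIV"
    unfolding nn_def by (rule infsum_mono[OF r[unfolded R2_def] hs le])
  also have "\<dots> = nn g" using Pop2_has[OF assms] by (simp add: infsumI)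
  finally show "nn (Pop g) \<le> nn g" .
qed

lemma Pop_lin: assumes "R2 g" "R2 h"
  shows "Pop (\<lambda>x. g x - s * h x) x = Pop g x - s * Pop h x"
proof -
  have "Pop (\<lambda>x. g x - s * h x) x = infsum (\<lambda>y. P x y * g y - s * (P x y * h y)) UNIV"
    unfolding Pop_def by (simp add: algebra_simps)
  also have "\<dots> = Pop g x - infsum (\<lambda>y. s * (P x y * h y)) UNIV"
    unfolding Pop_def
    by (rule infsum_diff'[OF Pop_summ[OF assms(1)] summable_on_cmult_right[OF Pop_summ[OF assms(2)]]])
  also have "infsum (\<lambda>y. s * (P x y * h y)) UNIV = s * Pop h x"
    unfolding Pop_def by (rule infsum_cmult_right')
  finally show ?thesis .
qed

lemma Pop_selfadj: assumes g: "R2 g" and h: "R2 h" shows "ip (Pop g) h = ip g (Pop h)"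
proof -
  define E where "E = (\<lambda>x y. c x y * g y * h x)"
  have dom: "(\<lambda>(x,y). (c x y * (g y)^2 + c x y * (h x)^2)/2) summable_on UNIV \<times> UNIV"
  proof -
    have "(\<lambda>p. (\<lambda>(x,y). c x y * (g y)^2) p + (\<lambda>(x,y). c x y * (h x)^2) p) summable_on UNIV \<times> UNIV"
      by (rule summable_on_add[OF double1(2)[OF g] double2[OF h]])
    from summable_on_cmult_left[OF this, of "1/2"] show ?thesis by (simp add: case_prod_unfold)
  qed
  have Es: "(\<lambda>(x,y). E x y) summable_on UNIV \<times> UNIV"
  proof (rule abs_dom_summable[OF dom])
    fix p :: "'a \<times> 'a" obtain x y where p: "p = (x,y)" by (cases p)
    have "0 \<le> (\<bar>g y\<bar> - \<bar>h x\<bar>)^2" by simp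
    then have "2 * \<bar>g y * h x\<bar> \<le> (g y)^2 + (h x)^2"
      by (simp add: power2_diff abs_mult power2_abs)
    then have "c x y * (2 * \<bar>g y * h x\<bar>) \<le> c x y * ((g y)^2 + (h x)^2)"
      by (rule mult_left_mono) (simp add: c_nonneg)
    moreover have "\<bar>E x y\<bar> = c x y * \<bar>g y * h x\<bar>" unfolding E_def
      using c_nonneg[of x y] by (simp add: abs_mult)
    ultimately show "\<bar>(\<lambda>(x,y). E x y) p\<bar> \<le> (\<lambda>(x,y). (c x y * (g y)^2 + c x y * (h x)^2)/2) p"
      unfolding p by (simp add: algebra_simps)
  qed
  have swap: "infsum (\<lambda>x. infsum (\<lambda>y. E x y) UNIV) UNIV = infsum (\<lambda>y. infsum (\<lambda>x. E x y) UNIV) UNIV"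
    by (rule infsum_swap_banach[OF Es])
  have L: "infsum (\<lambda>y. E x y) UNIV = pw x * Pop g x * h x" for x
  proof -
    have "pw x * Pop g x * h x = h x * pw x * infsum (\<lambda>y. P x y * g y) UNIV"
      unfolding Pop_def by (simp add: algebra_simps)
    also have "\<dots> = infsum (\<lambda>y. h x * pw x * (P x y * g y)) UNIV"
      by (rule infsum_cmult_right'[symmetric])
    also have "\<dots> = infsum (\<lambda>y. E x y) UNIV"
      unfolding E_def
    proof (rule infsum_cong)
      fix y
      have "h x * pw x * (P x y * g y) = (pw x * P x y) * g y * h x" by (simp add: algebra_simps)
      also have "\<dots> = c x y * g y * h x" by (simp add: pw_P)
      finally show "h x * pw x * (P x y * g y) = c x y * g y * h x" .
    qed
    finally show ?thesis by simp
  qed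
  have R: "infsum (\<lambda>x. E x y) UNIV = pw y * g y * Pop h y" for y
  proof -
    have "pw y * g y * Pop h y = g y * pw y * infsum (\<lambda>x. P y x * h x) UNIV"
      unfolding Pop_def by (simp add: algebra_simps)
    also have "\<dots> = infsum (\<lambda>x. g y * pw y * (P y x * h x)) UNIV"
      by (rule infsum_cmult_right'[symmetric])
    also have "\<dots> = infsum (\<lambda>x. E x y) UNIV"
      unfolding E_def
    proof (rule infsum_cong)
      fix x
      have "g y * pw y * (P y x * h x) = g y * (pw y * P y x) * h x" by (simp add: algebra_simps)
      also have "\<dots> = c x y * g y * h x" by (simp add: pw_P c_sym[of y x])
      finally show "g y * pw y * (P y x * h x) = c x y * g y * h x" .
    qed
    finally show ?thesis by simp
  qed
  show ?thesis unfolding ip_def using swap L R by simp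
qed

lemma ip_Pop_le: assumes "R2 g" shows "\<bar>ip (Pop g) g\<bar> \<le> nn g"
proof -
  have "(ip (Pop g) g)^2 \<le> nn (Pop g) * nn g" by (rule ip_cs[OF R2_Pop(1)[OF assms] assms])
  also have "\<dots> \<le> nn g * nn g" by (rule mult_right_mono[OF R2_Pop(2)[OF assms] nn_nonneg])
  finally have "\<bar>ip (Pop g) g\<bar>^2 \<le> (nn g)^2" by (simp add: power2_eq_square)
  then show ?thesis using nn_nonneg by (rule power2_le_imp_le)
qed

lemma R2_Lr: assumes "R2 g" shows "R2 (Lr g)"
  unfolding Lr_def by (rule R2_diff[OF assms R2_Pop(1)[OF assms]])

lemma Lr_lin: assumes "R2 g" "R2 h"
  shows "Lr (\<lambda>x. g x - s * h x) x = Lr g x - s * Lr h x"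
  unfolding Lr_def using Pop_lin[OF assms] by (simp add: algebra_simps)

lemma ip_Lr_self: assumes "R2 g" shows "ip (Lr g) g = nn g - ip (Pop g) g"
proof -
  have "ip (Lr g) g = ip g g - ip (Pop g) g"
    unfolding Lr_def by (rule ip_diff_left[OF assms R2_Pop(1)[OF assms] assms])
  then show ?thesis by (simp add: ip_self)
qed

lemma ip_Lr_nonneg: assumes "R2 g" shows "ip (Lr g) g \<ge> 0"
  using ip_Lr_self[OF assms] ip_Pop_le[OF assms] by simp

lemma Lr_selfadj: assumes "R2 g" "R2 h" shows "ip (Lr g) h = ip g (Lr h)"
proof -
  have e1: "ip (Lr g) h = ip g h - ip (Pop g) h"
    unfolding Lr_def by (rule ip_diff_left[OF assms(1) R2_Pop(1)[OF assms(1)] assms(2)])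
  have e2: "ip (Lr h) g = ip h g - ip (Pop h) g"
    unfolding Lr_def by (rule ip_diff_left[OF assms(2) R2_Pop(1)[OF assms(2)] assms(1)])
  have e3: "ip (Pop g) h = ip g (Pop h)" by (rule Pop_selfadj[OF assms])
  have e4: "ip g (Pop h) = ip (Pop h) g" by (rule ip_sym)
  have e5: "ip g (Lr h) = ip (Lr h) g" by (rule ip_sym)
  have e6: "ip g h = ip h g" by (rule ip_sym)
  show ?thesis unfolding e1 e5 e2 e3 e4 e6 ..
qed

lemma nn_diff_le: assumes "R2 u" "R2 v" shows "nn (\<lambda>x. u x - v x) \<le> 2 * nn u + 2 * nn v"
proof -
  have s: "(\<lambda>x. 2 * (pw x * (u x)^2) + 2 * (pw x * (v x)^2)) summable_on UNIV"
    by (intro summable_on_add summable_on_cmult_right assms[unfolded R2_def])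
  have "nn (\<lambda>x. u x - v x) \<le> infsum (\<lambda>x. 2 * (pw x * (u x)^2) + 2 * (pw x * (v x)^2)) UNIV"
    unfolding nn_def
  proof (rule infsum_mono[OF R2_diff[OF assms, unfolded R2_def] s])
    fix x
    have "(u x - v x)^2 \<le> 2*(u x)^2 + 2*(v x)^2"
    proof -
      have "0 \<le> (u x + v x)^2" by simp
      then show ?thesis by (simp add: power2_sum power2_diff)
    qed
    then have "pw x * (u x - v x)^2 \<le> pw x * (2*(u x)^2 + 2*(v x)^2)"
      by (rule mult_left_mono) (use pw_pos[of x] in simp)
    then show "pw x * (u x - v x)^2 \<le> 2 * (pw x * (u x)^2) + 2 * (pw x * (v x)^2)"
      by (simp add: algebra_simps)
  qed
  also have "\<dots> = 2 * nn u + 2 * nn v"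
    unfolding nn_def
    using infsum_add[OF summable_on_cmult_right[OF assms(1)[unfolded R2_def]] summable_on_cmult_right[OF assms(2)[unfolded R2_def]], of 2 2]
    by (simp add: infsum_cmult_right')
  finally show ?thesis .
qed

lemma nn_scale: "nn (\<lambda>x. s * u x) = s^2 * nn u"
proof -
  have "nn (\<lambda>x. s * u x) = infsum (\<lambda>x. s^2 * (pw x * (u x)^2)) UNIV"
    unfolding nn_def by (simp add: power_mult_distrib algebra_simps)
  then show ?thesis unfolding nn_def by (simp add: infsum_cmult_right')
qed

lemma nn_Lr: assumes "R2 g" shows "nn (Lr g) \<le> 4 * nn g"
proof -
  have "nn (Lr g) \<le> 2 * nn g + 2 * nn (Pop g)"
    unfolding Lr_def by (rule nn_diff_le[OF assms R2_Pop(1)[OF assms]])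
  then show ?thesis using R2_Pop(2)[OF assms] by simp
qed

end


lemma has_sum_diff':
  fixes f g :: "'a \<Rightarrow> 'b::{topological_ab_group_add}"
  assumes "(f has_sum a) A" "(g has_sum b) A"
  shows "((\<lambda>x. f x - g x) has_sum (a - b)) A"
proof -
  have "((\<lambda>x. - g x) has_sum (- b)) A" using assms(2) by (simp add: has_sum_uminus)
  from has_sum_add[OF assms(1) this] show ?thesis by simp
qed

context netw begin

lemma Lr_has: assumes "R2 g" shows "((\<lambda>y. P x y * (g x - g y)) has_sum Lr g x) UNIV"
proof -
  have a: "((\<lambda>y. P x y * g x) has_sum (1 * g x)) UNIV" by (rule has_sum_cmult_left[OF P_has])
  have b: "((\<lambda>y. P x y * g y) has_sum Pop g x) UNIV"
    unfolding Pop_def using Pop_summ[OF assms] by simp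
  show ?thesis using has_sum_diff'[OF a b] unfolding Lr_def by (simp add: algebra_simps)
qed

lemma l2_iff: "f \<in> l2 c \<longleftrightarrow> R2 (\<lambda>x. Re (f x)) \<and> R2 (\<lambda>x. Im (f x))"
proof
  assume f: "f \<in> l2 c"
  then have fs: "(\<lambda>x. pw x * (cmod (f x))^2) summable_on UNIV" unfolding l2_def by simp
  have e: "(cmod (f x))^2 = (Re (f x))^2 + (Im (f x))^2" for x by (simp add: cmod_power2)
  show "R2 (\<lambda>x. Re (f x)) \<and> R2 (\<lambda>x. Im (f x))" unfolding R2_def
  proof
    show "(\<lambda>x. pw x * (Re (f x))^2) summable_on UNIV"
      by (rule nonneg_dom_summable[OF fs]) (auto simp: e pw_pos less_imp_le intro!: mult_left_mono)
    show "(\<lambda>x. pw x * (Im (f x))^2) summable_on UNIV"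
      by (rule nonneg_dom_summable[OF fs]) (auto simp: e pw_pos less_imp_le intro!: mult_left_mono)
  qed
next
  assume r: "R2 (\<lambda>x. Re (f x)) \<and> R2 (\<lambda>x. Im (f x))"
  have "(\<lambda>x. pw x * (Re (f x))^2 + pw x * (Im (f x))^2) summable_on UNIV"
    using r unfolding R2_def by (intro summable_on_add) auto
  then show "f \<in> l2 c" unfolding l2_def by (simp add: cmod_power2 algebra_simps)
qed

lemma l2norm_eq: assumes "f \<in> l2 c"
  shows "l2norm c f = sqrt (nn (\<lambda>x. Re (f x)) + nn (\<lambda>x. Im (f x)))"
proof -
  have r: "R2 (\<lambda>x. Re (f x))" "R2 (\<lambda>x. Im (f x))" using assms l2_iff by auto
  have "infsum (\<lambda>x. pw x * (cmod (f x))^2) UNIV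
      = infsum (\<lambda>x. pw x * (Re (f x))^2 + pw x * (Im (f x))^2) UNIV"
    by (simp add: cmod_power2 algebra_simps)
  also have "\<dots> = nn (\<lambda>x. Re (f x)) + nn (\<lambda>x. Im (f x))"
    unfolding nn_def by (rule infsum_add) (use r in \<open>auto simp: R2_def\<close>)
  finally show ?thesis unfolding l2norm_def by simp
qed

lemma l2norm_real: "l2norm c (\<lambda>x. complex_of_real (g x)) = sqrt (nn g)"
  unfolding l2norm_def nn_def by simp

lemma l2_real: "R2 g \<Longrightarrow> (\<lambda>x. complex_of_real (g x)) \<in> l2 c"
  unfolding l2_iff using R2_0 by simp

lemma lap_eq: assumes "f \<in> l2 c"
  shows "lap c f x = complex_of_real (Lr (\<lambda>y. Re (f y)) x) + \<i> * complex_of_real (Lr (\<lambda>y. Im (f y)) x)"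
proof -
  have r: "R2 (\<lambda>x. Re (f x))" "R2 (\<lambda>x. Im (f x))" using assms l2_iff by auto
  have h1: "((\<lambda>y. complex_of_real (P x y * (Re (f x) - Re (f y)))) has_sum
      complex_of_real (Lr (\<lambda>y. Re (f y)) x)) UNIV"
    by (rule has_sum_of_real[OF Lr_has[OF r(1)]])
  have h2: "((\<lambda>y. \<i> * complex_of_real (P x y * (Im (f x) - Im (f y)))) has_sum
      \<i> * complex_of_real (Lr (\<lambda>y. Im (f y)) x)) UNIV"
    by (rule has_sum_cmult_right[OF has_sum_of_real[OF Lr_has[OF r(2)]]])
  have e: "complex_of_real (P x y) * (f x - f y) =
      complex_of_real (P x y * (Re (f x) - Re (f y))) + \<i> * complex_of_real (P x y * (Im (f x) - Im (f y)))" for y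
    by (simp add: complex_eq_iff)
  have "((\<lambda>y. complex_of_real (P x y) * (f x - f y)) has_sum
     (complex_of_real (Lr (\<lambda>y. Re (f y)) x) + \<i> * complex_of_real (Lr (\<lambda>y. Im (f y)) x))) UNIV"
    unfolding e by (rule has_sum_add[OF h1 h2])
  then show ?thesis unfolding lap_def by (simp add: infsumI)
qed

lemma Pop_0: "Pop (\<lambda>x. 0) = (\<lambda>x. 0)" unfolding Pop_def by simp
lemma Lr_0: "Lr (\<lambda>x. 0) = (\<lambda>x. 0)" unfolding Lr_def Pop_0 by simp

lemma lap_real: assumes "R2 g"
  shows "lap c (\<lambda>x. complex_of_real (g x)) x = complex_of_real (Lr g x)"
  using lap_eq[OF l2_real[OF assms]] by (simp add: Lr_0)

definition RQ :: "real set" where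
  "RQ = {ip (Lr g) g / nn g | g. R2 g \<and> nn g > 0}"

lemma RQ_bdd: "bdd_below RQ"
  unfolding RQ_def bdd_below_def
  by (rule exI[of _ 0]) (auto intro!: divide_nonneg_pos ip_Lr_nonneg)

lemma RQ_lower: assumes "RQ \<noteq> {}" "R2 g" shows "Inf RQ * nn g \<le> ip (Lr g) g"
proof (cases "nn g > 0")
  case True
  have "Inf RQ \<le> ip (Lr g) g / nn g"
    by (rule cInf_lower[OF _ RQ_bdd]) (use True assms in \<open>auto simp: RQ_def\<close>)
  then show ?thesis using True by (simp add: pos_le_divide_eq)
next
  case False
  then have "nn g = 0" using nn_nonneg[of g] by simp
  then have "\<forall>x. g x = 0" using nn_zero[OF assms(2)] by blast
  then have "ip (Lr g) g = 0" unfolding ip_def by simp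
  then show ?thesis using \<open>nn g = 0\<close> by simp
qed

lemma m_not_resolvent: assumes ne: "RQ \<noteq> {}"
  shows "complex_of_real (Inf RQ) \<notin> resolvent_set c"
proof
  define m where "m = Inf RQ"
  assume "complex_of_real (Inf RQ) \<in> resolvent_set c"
  then obtain S B where
    S1: "\<forall>f\<in>l2 c. S f \<in> l2 c" and
    S2: "\<forall>f\<in>l2 c. l2norm c (S f) \<le> B * l2norm c f" and
    S3: "\<forall>f\<in>l2 c. S (\<lambda>x. lap c f x - complex_of_real m * f x) = f"
    unfolding resolvent_set_def m_def by blast
  define A where "A = (\<lambda>u x. Lr u x - m * u x)"
  have RA: "R2 u \<Longrightarrow> R2 (A u)" for u unfolding A_def by (rule R2_lin[OF R2_Lr])
  define K0 where "K0 = 8 + 2 * m^2"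
  have K0: "K0 \<ge> 0" unfolding K0_def by simp
  have nnA: "nn (A u) \<le> K0 * nn u" if u: "R2 u" for u
  proof -
    have "nn (A u) \<le> 2 * nn (Lr u) + 2 * nn (\<lambda>x. m * u x)"
      unfolding A_def by (rule nn_diff_le[OF R2_Lr[OF u] R2_scale[OF u]])
    also have "\<dots> \<le> 2 * (4 * nn u) + 2 * (m^2 * nn u)" using nn_Lr[OF u] by (simp add: nn_scale)
    finally show ?thesis unfolding K0_def by (simp add: algebra_simps)
  qed
  have inv: "sqrt (nn g) \<le> B * sqrt (nn (A g))" if g: "R2 g" for g
  proof -
    define f where "f = (\<lambda>x. complex_of_real (g x))"
    have fl: "f \<in> l2 c" unfolding f_def by (rule l2_real[OF g])
    have hc: "(\<lambda>x. lap c f x - complex_of_real m * f x) = (\<lambda>x. complex_of_real (A g x))"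
      unfolding f_def A_def using lap_real[OF g] by simp
    have hl: "(\<lambda>x. complex_of_real (A g x)) \<in> l2 c" by (rule l2_real[OF RA[OF g]])
    have "S (\<lambda>x. complex_of_real (A g x)) = f" using S3 fl hc by metis
    then have "l2norm c f \<le> B * l2norm c (\<lambda>x. complex_of_real (A g x))" using S2 hl by metis
    then show ?thesis unfolding f_def l2norm_real .
  qed
  have linB: "ip (\<lambda>x. A g1 x - s * A g2 x) h = ip (A g1) h - s * ip (A g2) h"
    if "R2 g1" "R2 g2" "R2 h" for g1 g2 h s
    by (rule ip_lin_left[OF RA[OF that(1)] RA[OF that(2)] that(3)])
  have Alin: "A (\<lambda>x. g1 x - s * g2 x) = (\<lambda>x. A g1 x - s * A g2 x)"
    if "R2 g1" "R2 g2" for g1 g2 s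
    unfolding A_def using Lr_lin[OF that] by (auto simp: algebra_simps)
  have Bsym0: "ip (A u) v = ip (Lr u) v - m * ip u v" if "R2 u" "R2 v" for u v
    unfolding A_def by (rule ip_lin_left[OF R2_Lr[OF that(1)] that(1) that(2)])
  have cs: "(ip (A g) h)^2 \<le> ip (A g) g * ip (A h) h" if "R2 g" "R2 h" for g h
  proof (rule cs_generic[where B = "\<lambda>u v. ip (A u) v", OF _ _ _ that])
    show "\<And>g1 g2 h s. R2 g1 \<Longrightarrow> R2 g2 \<Longrightarrow> R2 h \<Longrightarrow>
        ip (A (\<lambda>x. g1 x - s * g2 x)) h = ip (A g1) h - s * ip (A g2) h"
      using Alin linB by simp
    show "\<And>g h. R2 g \<Longrightarrow> R2 h \<Longrightarrow> ip (A g) h = ip (A h) g"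
    proof -
      fix g h assume a: "R2 g" "R2 h"
      show "ip (A g) h = ip (A h) g"
        unfolding Bsym0[OF a] Bsym0[OF a(2,1)] Lr_selfadj[OF a] using ip_sym by metis
    qed
    show "\<And>g. R2 g \<Longrightarrow> ip (A g) g \<ge> 0"
      using Bsym0 RQ_lower[OF ne] ip_self unfolding m_def by simp
  qed
  define K1 where "K1 = B^2 * sqrt K0"
  have K1: "K1 \<ge> 0" unfolding K1_def using K0 by simp
  define \<epsilon> where "\<epsilon> = 1 / (K1 + 1)"
  have ep: "\<epsilon> > 0" "K1 * \<epsilon> < 1" unfolding \<epsilon>_def using K1 by (auto simp: field_simps)
  have "Inf RQ < m + \<epsilon>" unfolding m_def using ep by simp
  then obtain v where "v \<in> RQ" "v < m + \<epsilon>" using cInf_lessD[OF ne] by blast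
  then obtain g where g: "R2 g" "nn g > 0" and gv: "ip (Lr g) g / nn g < m + \<epsilon>"
    unfolding RQ_def by blast
  have Bgg: "ip (A g) g < \<epsilon> * nn g"
  proof -
    have "ip (Lr g) g < (m + \<epsilon>) * nn g" using gv g(2) by (simp add: pos_divide_less_eq)
    then show ?thesis using Bsym0[OF g(1) g(1)] ip_self by (simp add: algebra_simps)
  qed
  have Bgg0: "ip (A g) g \<ge> 0" using Bsym0[OF g(1) g(1)] RQ_lower[OF ne g(1)] ip_self unfolding m_def by simp
  define h where "h = A g"
  have hR: "R2 h" unfolding h_def by (rule RA[OF g(1)])
  have Bhh: "ip (A h) h \<le> sqrt K0 * nn h"
  proof -
    have "(ip (A h) h)^2 \<le> nn (A h) * nn h" by (rule ip_cs[OF RA[OF hR] hR])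
    also have "\<dots> \<le> (K0 * nn h) * nn h" by (rule mult_right_mono[OF nnA[OF hR] nn_nonneg])
    also have "\<dots> = (sqrt K0 * nn h)^2" using K0 by (simp add: power2_eq_square power_mult_distrib)
    finally have "\<bar>ip (A h) h\<bar> \<le> sqrt K0 * nn h"
      using power2_le_imp_le[of "\<bar>ip (A h) h\<bar>" "sqrt K0 * nn h"] nn_nonneg K0 by simp
    then show ?thesis by simp
  qed
  have Bhh0: "ip (A h) h \<ge> 0" using Bsym0[OF hR hR] RQ_lower[OF ne hR] ip_self unfolding m_def by simp
  have Bgh: "ip (A g) h = nn h" unfolding h_def by (rule ip_self)
  have "(nn h)^2 \<le> ip (A g) g * ip (A h) h" using cs[OF g(1) hR] Bgh by simp
  also have "\<dots> \<le> (\<epsilon> * nn g) * (sqrt K0 * nn h)"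
    by (rule mult_mono) (use Bgg Bhh Bgg0 Bhh0 ep in auto)
  finally have main: "(nn h)^2 \<le> (\<epsilon> * nn g) * (sqrt K0 * nn h)" .
  have sq: "sqrt (nn g) \<le> B * sqrt (nn h)" unfolding h_def by (rule inv[OF g(1)])
  have sg: "sqrt (nn g) > 0" using g(2) by simp
  have hpos: "nn h > 0"
  proof (rule ccontr)
    assume "\<not> nn h > 0"
    then have "nn h = 0" using nn_nonneg[of h] by simp
    then show False using sq sg by simp
  qed
  have Bpos: "B > 0" using sq sg hpos by (smt (verit) mult_nonpos_nonneg real_sqrt_ge_zero)
  have "nn g \<le> B^2 * nn h"
  proof -
    have "(sqrt (nn g))^2 \<le> (B * sqrt (nn h))^2"
      using sq sg by (intro power_mono) auto
    then show ?thesis using nn_nonneg by (simp add: power_mult_distrib)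
  qed
  moreover have "nn h \<le> \<epsilon> * sqrt K0 * nn g"
  proof -
    have "nn h * nn h \<le> (\<epsilon> * sqrt K0 * nn g) * nn h" using main by (simp add: power2_eq_square algebra_simps)
    then show ?thesis using hpos by simp
  qed
  ultimately have "nn g \<le> B^2 * (\<epsilon> * sqrt K0 * nn g)"
    using Bpos by (smt (verit) mult_left_mono zero_le_power2)
  also have "\<dots> = (K1 * \<epsilon>) * nn g" unfolding K1_def by (simp add: algebra_simps)
  also have "\<dots> < nn g" using ep g(2) by simp
  finally show False by simp
qed

end


lemma geom_has:
  fixes r :: real assumes "0 < r" "r < 1"
  shows "((\<lambda>n::nat. r^(n+1)) has_sum (r/(1-r))) UNIV"
proof -
  have "(\<lambda>n. r^n) sums (1/(1-r))" using geometric_sums[of r] assms by simp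
  then have "(\<lambda>n. r * r^n) sums (r * (1/(1-r)))" by (rule sums_mult)
  then have "(\<lambda>n::nat. r^(n+1)) sums (r/(1-r))" by simp
  then show ?thesis by (rule sums_nonneg_imp_has_sum) (use assms in simp)
qed

lemma geom_summ: fixes r :: real assumes "0 < r" "r < 1"
  shows "(\<lambda>n::nat. r^(n+1) * K) summable_on UNIV"
  using summable_on_cmult_left[of _ UNIV K] geom_has[OF assms] by (auto simp: summable_on_def)

context netw begin

definition it :: "nat \<Rightarrow> ('a \<Rightarrow> real) \<Rightarrow> 'a \<Rightarrow> real" where
  "it n g = (Pop ^^ n) g"

lemma it_Suc: "it (Suc n) g = Pop (it n g)" unfolding it_def by simp
lemma it_0: "it 0 g = g" unfolding it_def by simp

lemma it_R2: assumes "R2 g" shows "R2 (it n g) \<and> nn (it n g) \<le> nn g"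
proof (induction n)
  case 0 then show ?case using assms by (simp add: it_0)
next
  case (Suc n)
  then show ?case unfolding it_Suc using R2_Pop[of "it n g"] by auto
qed

lemma it_pt: assumes "R2 g" shows "(it n g x)^2 \<le> nn g / pw x"
proof -
  have "pw x * (it n g x)^2 \<le> nn g" using pt_le[of "it n g" x] it_R2[OF assms, of n] by simp
  then show ?thesis using pw_pos[of x] by (simp add: pos_le_divide_eq mult.commute)
qed

lemma R2_abs: "R2 g \<Longrightarrow> R2 (\<lambda>x. \<bar>g x\<bar>)" unfolding R2_def by simp
lemma nn_abs: "nn (\<lambda>x. \<bar>g x\<bar>) = nn g" unfolding nn_def by simp

definition NU :: "real \<Rightarrow> ('a \<Rightarrow> real) \<Rightarrow> 'a \<Rightarrow> real" where
  "NU r g x = infsum (\<lambda>n. r^(n+1) * it n g x) UNIV"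

context
  fixes r :: real and g :: "'a \<Rightarrow> real"
  assumes r0: "0 < r" and r1: "r < 1" and g: "R2 g"
begin

lemma sq_summ: "(\<lambda>n. r^(n+1) * (it n g x)^2) summable_on UNIV"
proof (rule nonneg_dom_summable[OF geom_summ[OF r0 r1, of "nn g / pw x"]])
  fix n
  show "0 \<le> r^(n+1) * (it n g x)^2" using r0 by simp
  show "r^(n+1) * (it n g x)^2 \<le> r^(n+1) * (nn g / pw x)"
    by (rule mult_left_mono[OF it_pt[OF g]]) (use r0 in simp)
qed

lemma NU_summ: "(\<lambda>n. r^(n+1) * it n g x) summable_on UNIV"
  using infsum_jensen(1)[OF _ geom_has[OF r0 r1] sq_summ] r0 by simp

lemma NU_sq: "(NU r g x)^2 \<le> (r/(1-r)) * infsum (\<lambda>n. r^(n+1) * (it n g x)^2) UNIV"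
  using infsum_jensen(2)[OF _ geom_has[OF r0 r1] sq_summ] r0 unfolding NU_def by simp

lemma NU_R2: "R2 (NU r g)" and NU_nn: "nn (NU r g) \<le> (r/(1-r))^2 * nn g"
proof -
  define W where "W = r/(1-r)"
  have W0: "W > 0" unfolding W_def using r0 r1 by simp
  define D where "D = (\<lambda>x n. r^(n+1) * (pw x * (it n g x)^2))"
  define s where "s = (\<lambda>n. r^(n+1) * nn (it n g))"
  have Dnn: "D x n \<ge> 0" for x n unfolding D_def using r0 pw_pos[of x] by simp
  have rows: "((\<lambda>x. D x n) has_sum s n) UNIV" for n
  proof -
    have "((\<lambda>x. pw x * (it n g x)^2) has_sum nn (it n g)) UNIV"
      using it_R2[OF g, of n] unfolding R2_def nn_def by simp
    then show ?thesis unfolding D_def s_def by (rule has_sum_cmult_right)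
  qed
  have sle: "s n \<le> r^(n+1) * nn g" for n
    unfolding s_def by (rule mult_left_mono) (use it_R2[OF g, of n] r0 in auto)
  have ss: "s summable_on UNIV"
    by (rule nonneg_dom_summable[OF geom_summ[OF r0 r1, of "nn g"]])
       (use sle r0 nn_nonneg in \<open>auto simp: s_def\<close>)
  note dd = nonneg_double_has_sum[OF Dnn rows ss]
  have Ssum: "infsum s UNIV \<le> W * nn g"
  proof -
    have "infsum s UNIV \<le> infsum (\<lambda>n. r^(n+1) * nn g) UNIV"
      by (rule infsum_mono[OF ss geom_summ[OF r0 r1] sle])
    also have "\<dots> = W * nn g"
      using infsum_cmult_left'[of "\<lambda>n. r^(n+1)" "nn g" UNIV] infsumI[OF geom_has[OF r0 r1]]
      unfolding W_def by simp
    finally show ?thesis .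
  qed
  have ptb: "pw x * (NU r g x)^2 \<le> W * infsum (D x) UNIV" for x
  proof -
    have "pw x * (NU r g x)^2 \<le> pw x * (W * infsum (\<lambda>n. r^(n+1) * (it n g x)^2) UNIV)"
      by (rule mult_left_mono[OF NU_sq[unfolded W_def[symmetric]]]) (use pw_pos[of x] in simp)
    also have "\<dots> = W * infsum (\<lambda>n. pw x * (r^(n+1) * (it n g x)^2)) UNIV"
      by (simp add: infsum_cmult_right')
    also have "\<dots> = W * infsum (D x) UNIV" unfolding D_def by (simp add: algebra_simps)
    finally show ?thesis .
  qed
  have dom: "(\<lambda>x. W * infsum (D x) UNIV) summable_on UNIV"
    using dd(1) by (intro summable_on_cmult_right) (auto simp: summable_on_def)
  show r2: "R2 (NU r g)" unfolding R2_def
    by (rule nonneg_dom_summable[OF dom]) (use ptb pw_pos in \<open>auto simp: less_imp_le\<close>)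
  have "nn (NU r g) \<le> infsum (\<lambda>x. W * infsum (D x) UNIV) UNIV"
    unfolding nn_def by (rule infsum_mono[OF r2[unfolded R2_def] dom ptb])
  also have "\<dots> = W * infsum s UNIV" using dd(1) by (simp add: infsum_cmult_right' infsumI)
  also have "\<dots> \<le> W * (W * nn g)" by (rule mult_left_mono[OF Ssum]) (use W0 in simp)
  finally show "nn (NU r g) \<le> (r/(1-r))^2 * nn g" unfolding W_def by (simp add: power2_eq_square)
qed

lemma Pabs_bound: assumes "R2 h" "nn h \<le> nn g"
  shows "infsum (\<lambda>y. P x y * \<bar>h y\<bar>) UNIV \<le> sqrt (nn g / pw x)"
    and "(\<lambda>y. P x y * \<bar>h y\<bar>) summable_on UNIV"
proof -
  have ha: "R2 (\<lambda>y. \<bar>h y\<bar>)" by (rule R2_abs[OF assms(1)])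
  show "(\<lambda>y. P x y * \<bar>h y\<bar>) summable_on UNIV" using Pop_summ[OF ha] by simp
  have "(Pop (\<lambda>y. \<bar>h y\<bar>) x)^2 \<le> infsum (\<lambda>y. P x y * (\<bar>h y\<bar>)^2) UNIV" by (rule Pop_sq[OF ha])
  also have "\<dots> \<le> nn h / pw x"
  proof -
    have "pw x * infsum (\<lambda>y. P x y * (h y)^2) UNIV = infsum (\<lambda>y. c x y * (h y)^2) UNIV"
      by (simp add: infsum_cmult_right'[symmetric] mult.assoc[symmetric] pw_P)
    also have "\<dots> \<le> infsum (\<lambda>y. pw y * (h y)^2) UNIV"
    proof (rule infsum_mono)
      show "(\<lambda>y. c x y * (h y)^2) summable_on UNIV"
        by (rule nonneg_dom_summable[OF assms(1)[unfolded R2_def]])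
           (auto simp: c_nonneg c_le2 intro: mult_right_mono)
      show "(\<lambda>y. pw y * (h y)^2) summable_on UNIV" using assms(1) unfolding R2_def .
      show "c x y * (h y)^2 \<le> pw y * (h y)^2" for y by (rule mult_right_mono[OF c_le2]) simp
    qed
    finally have "pw x * infsum (\<lambda>y. P x y * (h y)^2) UNIV \<le> nn h" unfolding nn_def .
    then show ?thesis using pw_pos[of x] by (simp add: pos_le_divide_eq mult.commute)
  qed
  also have "\<dots> \<le> nn g / pw x" using assms(2) pw_pos[of x] by (simp add: divide_right_mono)
  finally have "(Pop (\<lambda>y. \<bar>h y\<bar>) x)^2 \<le> nn g / pw x" .
  then have "Pop (\<lambda>y. \<bar>h y\<bar>) x \<le> sqrt (nn g / pw x)" by (simp add: real_le_rsqrt)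
  then show "infsum (\<lambda>y. P x y * \<bar>h y\<bar>) UNIV \<le> sqrt (nn g / pw x)" unfolding Pop_def .
qed

lemma Pop_NU: "Pop (NU r g) x = infsum (\<lambda>n. r^(n+1) * it (Suc n) g x) UNIV"
proof -
  define E where "E = (\<lambda>y n. P x y * (r^(n+1) * it n g y))"
  define E' where "E' = (\<lambda>y n. r^(n+1) * (P x y * \<bar>it n g y\<bar>))"
  define s' where "s' = (\<lambda>n. r^(n+1) * infsum (\<lambda>y. P x y * \<bar>it n g y\<bar>) UNIV)"
  have E'nn: "E' y n \<ge> 0" for y n unfolding E'_def using r0 P_nonneg by simp
  have rows: "((\<lambda>y. E' y n) has_sum s' n) UNIV" for n
    unfolding E'_def s'_def
    by (rule has_sum_cmult_right) (use Pabs_bound(2)[of "it n g" x] it_R2[OF g, of n] in simp)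
  have s'le: "s' n \<le> r^(n+1) * sqrt (nn g / pw x)" for n
    unfolding s'_def by (rule mult_left_mono) (use Pabs_bound(1)[of "it n g" x] it_R2[OF g, of n] r0 in auto)
  have s'nn: "s' n \<ge> 0" for n unfolding s'_def
    by (intro mult_nonneg_nonneg infsum_nonneg) (use r0 P_nonneg in auto)
  have s's: "s' summable_on UNIV"
    by (rule nonneg_dom_summable[OF geom_summ[OF r0 r1]]) (use s'le s'nn in auto)
  note dd = nonneg_double_has_sum[OF E'nn rows s's]
  have Es: "(\<lambda>(y,n). E y n) summable_on UNIV \<times> UNIV"
  proof (rule abs_dom_summable[OF dd(3)])
    fix p :: "'a \<times> nat" obtain y n where p: "p = (y,n)" by (cases p)
    show "\<bar>(\<lambda>(y,n). E y n) p\<bar> \<le> (\<lambda>(y,n). E' y n) p"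
      unfolding p E_def E'_def using r0 P_nonneg[of x y] by (simp add: abs_mult)
  qed
  have sw: "infsum (\<lambda>y. infsum (\<lambda>n. E y n) UNIV) UNIV = infsum (\<lambda>n. infsum (\<lambda>y. E y n) UNIV) UNIV"
    by (rule infsum_swap_banach[OF Es])
  have L: "infsum (\<lambda>n. E y n) UNIV = P x y * NU r g y" for y
    unfolding E_def NU_def by (rule infsum_cmult_right')
  have R: "infsum (\<lambda>y. E y n) UNIV = r^(n+1) * it (Suc n) g x" for n
  proof -
    have "infsum (\<lambda>y. E y n) UNIV = infsum (\<lambda>y. r^(n+1) * (P x y * it n g y)) UNIV"
      unfolding E_def by (simp add: algebra_simps)
    also have "\<dots> = r^(n+1) * Pop (it n g) x" unfolding Pop_def by (rule infsum_cmult_right')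
    finally show ?thesis by (simp add: it_Suc)
  qed
  show ?thesis using sw L R unfolding Pop_def by simp
qed

lemma NU_eq: "NU r g x = r * g x + r * Pop (NU r g) x"
proof -
  define a where "a = (\<lambda>n. r^(n+1) * it n g x)"
  define b where "b = (\<lambda>n. r^(n+1) * it (Suc n) g x)"
  have as: "a sums NU r g x" unfolding a_def NU_def
    by (rule has_sum_imp_sums) (use NU_summ in simp)
  have "(\<lambda>n. a (Suc n)) sums (NU r g x - a 0)" using as sums_Suc_iff[of a "NU r g x - a 0"] by simp
  moreover have "(\<lambda>n. a (Suc n)) = (\<lambda>n. r * b n)" unfolding a_def b_def by (simp add: algebra_simps)
  ultimately have bs1: "(\<lambda>n. r * b n) sums (NU r g x - a 0)" by simp
  have "(\<lambda>n. (1/r) * (r * b n)) sums ((1/r) * (NU r g x - a 0))" by (rule sums_mult[OF bs1])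
  then have bs: "b sums ((NU r g x - a 0)/r)" using r0 by simp
  have bsum: "b summable_on UNIV"
  proof (rule abs_dom_summable[OF geom_summ[OF r0 r1, of "sqrt (nn g / pw x)"]])
    fix n
    have "\<bar>it (Suc n) g x\<bar> \<le> sqrt (nn g / pw x)"
      by (rule real_le_rsqrt) (simp only: power2_abs it_pt[OF g])
    then show "\<bar>b n\<bar> \<le> r^(n+1) * sqrt (nn g / pw x)"
      unfolding b_def using r0 by (simp add: abs_mult mult_left_mono)
  qed
  have "b sums infsum b UNIV" by (rule has_sum_imp_sums) (use bsum in simp)
  then have "infsum b UNIV = (NU r g x - a 0)/r" using bs sums_unique2 by blast
  moreover have "Pop (NU r g) x = infsum b UNIV" unfolding b_def by (rule Pop_NU)
  moreover have "a 0 = r * g x" unfolding a_def by (simp add: it_0)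
  ultimately show ?thesis using r0 by (simp add: field_simps)
qed

end

lemma NU_solves: assumes t: "t < 0" and g: "R2 g"
  shows "(1 - t) * NU (1/(1-t)) g x - Pop (NU (1/(1-t)) g) x = g x"
proof -
  have r0: "0 < 1/(1-t)" and r1: "1/(1-t) < 1" using t by auto
  have "NU (1/(1-t)) g x = (1/(1-t)) * g x + (1/(1-t)) * Pop (NU (1/(1-t)) g) x"
    by (rule NU_eq[OF r0 r1 g])
  then have "NU (1/(1-t)) g x = (1/(1-t)) * (g x + Pop (NU (1/(1-t)) g) x)"
    by (simp add: distrib_left)
  then have "(1-t) * NU (1/(1-t)) g x = (1-t) * ((1/(1-t)) * (g x + Pop (NU (1/(1-t)) g) x))"
    by (rule arg_cong[where f = "\<lambda>z. (1-t) * z"])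
  also have "\<dots> = ((1-t) * (1/(1-t))) * (g x + Pop (NU (1/(1-t)) g) x)" by (simp only: mult.assoc)
  also have "(1-t) * (1/(1-t)) = 1" using t by simp
  finally have "(1-t) * NU (1/(1-t)) g x = g x + Pop (NU (1/(1-t)) g) x" by (simp only: mult_1)
  then show ?thesis by (simp only: add_diff_cancel_right)
qed

lemma NU_R2': "t < 0 \<Longrightarrow> R2 g \<Longrightarrow> R2 (NU (1/(1-t)) g)"
  by (rule NU_R2) auto

lemma NU_nn': assumes "t < 0" "R2 g" shows "nn (NU (1/(1-t)) g) \<le> (1/(-t))^2 * nn g"
proof -
  have "nn (NU (1/(1-t)) g) \<le> ((1/(1-t))/(1-1/(1-t)))^2 * nn g"
    by (rule NU_nn) (use assms in auto)
  moreover have "(1/(1-t))/(1-1/(1-t)) = 1/(-t)" using assms(1) by (simp add: field_simps)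
  ultimately show ?thesis by simp
qed

lemma unique_neg: assumes t: "t < 0" and v: "R2 v" and eq: "\<And>x. (1-t) * v x - Pop v x = 0"
  shows "v x = 0"
proof -
  have pe: "Pop v = (\<lambda>x. (1-t) * v x)" using eq by (auto simp: algebra_simps)
  have "(1-t)^2 * nn v \<le> nn v" using R2_Pop(2)[OF v] unfolding pe nn_scale .
  moreover have "(1-t)^2 > 1"
  proof -
    have a: "1 < 1-t" using t by simp
    have "1 * 1 < (1-t) * (1-t)" by (rule mult_strict_mono[OF a a]) (use t in auto)
    then show ?thesis by (simp add: power2_eq_square)
  qed
  ultimately have "nn v \<le> 0"
  proof -
    assume le: "(1-t)^2 * nn v \<le> nn v" and gt: "(1-t)^2 > 1"
    have "((1-t)^2 - 1) * nn v \<le> 0" using le by (simp add: left_diff_distrib)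
    moreover have "(1-t)^2 - 1 > 0" using gt by simp
    ultimately show "nn v \<le> 0" by (simp add: mult_le_0_iff)
  qed
  then have "nn v = 0" using nn_nonneg[of v] by simp
  then show ?thesis by (rule nn_zero[OF v])
qed

lemma NU_Lr: assumes t: "t < 0" and g: "R2 g"
  shows "NU (1/(1-t)) (\<lambda>x. Lr g x - t * g x) x = g x"
proof -
  define u where "u = NU (1/(1-t)) (\<lambda>x. Lr g x - t * g x)"
  have h: "R2 (\<lambda>x. Lr g x - t * g x)" by (rule R2_lin[OF R2_Lr[OF g] g])
  have u: "R2 u" unfolding u_def by (rule NU_R2'[OF t h])
  have v: "R2 (\<lambda>x. u x - 1 * g x)" by (rule R2_lin[OF u g])
  have "(1-t) * (u x - 1 * g x) - Pop (\<lambda>x. u x - 1 * g x) x = 0" for x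
  proof -
    have "Pop (\<lambda>x. u x - 1 * g x) x = Pop u x - 1 * Pop g x" by (rule Pop_lin[OF u g])
    moreover have "(1 - t) * u x - Pop u x = Lr g x - t * g x" unfolding u_def by (rule NU_solves[OF t h])
    ultimately show ?thesis unfolding Lr_def by (simp add: algebra_simps)
  qed
  from unique_neg[OF t v this] show ?thesis unfolding u_def by simp
qed

lemma resolvent_neg: assumes t: "t < 0" shows "complex_of_real t \<in> resolvent_set c"
proof -
  define r where "r = 1/(1-t)"
  define S where "S = (\<lambda>f x. complex_of_real (NU r (\<lambda>y. Re (f y)) x) + \<i> * complex_of_real (NU r (\<lambda>y. Im (f y)) x))"
  have ReS: "(\<lambda>x. Re (S f x)) = NU r (\<lambda>y. Re (f y))" "(\<lambda>x. Im (S f x)) = NU r (\<lambda>y. Im (f y))" for f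
    unfolding S_def by auto
  have Sl: "S f \<in> l2 c" if "f \<in> l2 c" for f
    unfolding l2_iff ReS r_def using that l2_iff NU_R2'[OF t] by auto
  have Sb: "l2norm c (S f) \<le> (1/(-t)) * l2norm c f" if f: "f \<in> l2 c" for f
  proof -
    have r: "R2 (\<lambda>x. Re (f x))" "R2 (\<lambda>x. Im (f x))" using f l2_iff by auto
    have "l2norm c (S f) = sqrt (nn (NU r (\<lambda>y. Re (f y))) + nn (NU r (\<lambda>y. Im (f y))))"
      using l2norm_eq[OF Sl[OF f]] ReS by simp
    also have "\<dots> \<le> sqrt ((1/(-t))^2 * (nn (\<lambda>y. Re (f y)) + nn (\<lambda>y. Im (f y))))"
      using NU_nn'[OF t r(1)] NU_nn'[OF t r(2)] unfolding r_def by (simp add: algebra_simps)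
    also have "\<dots> = (1/(-t)) * l2norm c f" using l2norm_eq[OF f] t by (simp add: real_sqrt_mult)
    finally show ?thesis .
  qed
  have S3: "S (\<lambda>x. lap c f x - complex_of_real t * f x) = f" if f: "f \<in> l2 c" for f
  proof -
    have r: "R2 (\<lambda>x. Re (f x))" "R2 (\<lambda>x. Im (f x))" using f l2_iff by auto
    have re: "(\<lambda>y. Re (lap c f y - complex_of_real t * f y)) = (\<lambda>y. Lr (\<lambda>y. Re (f y)) y - t * Re (f y))"
      using lap_eq[OF f] by simp
    have im: "(\<lambda>y. Im (lap c f y - complex_of_real t * f y)) = (\<lambda>y. Lr (\<lambda>y. Im (f y)) y - t * Im (f y))"
      using lap_eq[OF f] by simp
    show ?thesis unfolding S_def re im r_def
      using NU_Lr[OF t r(1)] NU_Lr[OF t r(2)] by (auto simp: complex_eq_iff)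
  qed
  have S4: "(\<lambda>x. lap c (S f) x - complex_of_real t * S f x) = f" if f: "f \<in> l2 c" for f
  proof
    fix x
    have r: "R2 (\<lambda>x. Re (f x))" "R2 (\<lambda>x. Im (f x))" using f l2_iff by auto
    have "lap c (S f) x = complex_of_real (Lr (NU r (\<lambda>y. Re (f y))) x) + \<i> * complex_of_real (Lr (NU r (\<lambda>y. Im (f y))) x)"
      using lap_eq[OF Sl[OF f]] ReS by simp
    moreover have "(1 - t) * NU r (\<lambda>y. Re (f y)) x - Pop (NU r (\<lambda>y. Re (f y))) x = Re (f x)"
      unfolding r_def by (rule NU_solves[OF t r(1)])
    moreover have "(1 - t) * NU r (\<lambda>y. Im (f y)) x - Pop (NU r (\<lambda>y. Im (f y))) x = Im (f x)"
      unfolding r_def by (rule NU_solves[OF t r(2)])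
    ultimately show "lap c (S f) x - complex_of_real t * S f x = f x"
      unfolding S_def Lr_def by (simp add: complex_eq_iff algebra_simps)
  qed
  show ?thesis unfolding resolvent_set_def
    using Sl Sb S3 S4 by blast
qed

end


lemma infsum_supp:
  fixes F :: "'a \<Rightarrow> real"
  assumes "finite \<Omega>" "\<And>x. x \<notin> \<Omega> \<Longrightarrow> F x = 0"
  shows "infsum F UNIV = sum F \<Omega>" and "F summable_on UNIV"
proof -
  have "infsum F UNIV = infsum F \<Omega>"
    by (rule infsum_cong_neutral) (use assms in auto)
  then show "infsum F UNIV = sum F \<Omega>" using assms(1) by simp
  show "F summable_on UNIV"
    by (rule finite_nonzero_values_imp_summable_on) (use assms in \<open>auto intro: finite_subset\<close>)
qed

context netw begin

lemma spec_facts: assumes ne: "RQ \<noteq> {}"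
  shows "lambda_min c \<le> Inf RQ" and "0 \<le> lambda_min c"
proof -
  define SP where "SP = {t::real. complex_of_real t \<in> lap_spectrum c}"
  have mSP: "Inf RQ \<in> SP" unfolding SP_def lap_spectrum_def using m_not_resolvent[OF ne] by simp
  have nn: "t \<ge> 0" if "t \<in> SP" for t
  proof (rule ccontr)
    assume "\<not> t \<ge> 0"
    then have "complex_of_real t \<in> resolvent_set c" using resolvent_neg by simp
    then show False using that unfolding SP_def lap_spectrum_def by simp
  qed
  have bdd: "bdd_below SP" unfolding bdd_below_def using nn by blast
  have lm: "lambda_min c = Inf SP" unfolding lambda_min_def SP_def ..
  show "lambda_min c \<le> Inf RQ" unfolding lm by (rule cInf_lower[OF mSP bdd])
  show "0 \<le> lambda_min c" unfolding lm by (rule cInf_greatest) (use mSP nn in auto)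
qed

lemma eigen_vec:
  assumes fin: "finite \<Omega>" and de: "dirichlet_eigenvalues c \<Omega> lam" and i1: "1 \<le> i0" and i2: "i0 \<le> card \<Omega>"
  shows "\<exists>g. R2 g \<and> nn g > 0 \<and> ip (Lr g) g = lam i0 * nn g"
proof -
  define n where "n = card \<Omega>"
  obtain e where bij: "bij_betw e {0..<n} \<Omega>" and
    cp: "char_poly (mat n n (\<lambda>(i,j). (if i = j then 1 else 0) - P (e i) (e j))) = (\<Prod>i\<in>{1..n}. [:- lam i, 1:])"
    using de unfolding dirichlet_eigenvalues_def n_def by blast
  define M where "M = mat n n (\<lambda>(i,j). (if i = j then 1 else 0) - P (e i) (e j))"
  have Mc: "M \<in> carrier_mat n n" unfolding M_def by simp
  have "poly (char_poly M) (lam i0) = (\<Prod>i\<in>{1..n}. lam i0 - lam i)"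
    unfolding M_def cp by (simp add: poly_prod)
  also have "\<dots> = 0" using i1 i2 unfolding n_def by (intro prod_zero) auto
  finally have "eigenvalue M (lam i0)" using eigenvalue_root_char_poly[OF Mc] by simp
  then obtain v where ev: "eigenvector M v (lam i0)" unfolding eigenvalue_def by blast
  have vc: "v \<in> carrier_vec n" and vnz: "v \<noteq> 0\<^sub>v n" and Mv: "M *\<^sub>v v = lam i0 \<cdot>\<^sub>v v"
    using ev Mc unfolding eigenvector_def by auto
  have dv: "dim_vec v = n" using vc by simp
  have inj: "inj_on e {0..<n}" using bij by (simp add: bij_betw_def)
  have eO: "e i \<in> \<Omega>" if "i < n" for i using bij that by (auto simp: bij_betw_def)
  define ei where "ei = the_inv_into {0..<n} e"
  have eie: "ei (e i) = i" if "i < n" for i unfolding ei_def using inj that by (simp add: the_inv_into_f_f)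
  define g where "g = (\<lambda>x. if x \<in> \<Omega> then v $ (ei x) else 0)"
  have ge: "g (e i) = v $ i" if "i < n" for i unfolding g_def using eO[OF that] eie[OF that] by simp
  have gout: "x \<notin> \<Omega> \<Longrightarrow> g x = 0" for x unfolding g_def by simp
  have sumO: "sum F \<Omega> = (\<Sum>i<n. F (e i))" for F :: "'a \<Rightarrow> real"
    using sum.reindex_bij_betw[OF bij, of F] by (simp add: lessThan_atLeast0)
  have gR: "R2 g" unfolding R2_def by (rule infsum_supp(2)[OF fin]) (simp add: gout)
  have nng: "nn g = (\<Sum>i<n. pw (e i) * (v $ i)^2)"
  proof -
    have "nn g = sum (\<lambda>x. pw x * (g x)^2) \<Omega>"
      unfolding nn_def by (rule infsum_supp(1)[OF fin]) (simp add: gout)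
    also have "\<dots> = (\<Sum>i<n. pw (e i) * (g (e i))^2)" by (rule sumO)
    also have "\<dots> = (\<Sum>i<n. pw (e i) * (v $ i)^2)" by (rule sum.cong) (simp_all add: ge)
    finally show ?thesis .
  qed
  obtain k0 where k0: "k0 < n" "v $ k0 \<noteq> 0"
  proof -
    have "\<not> (\<forall>i<n. v $ i = 0)"
    proof
      assume "\<forall>i<n. v $ i = 0"
      then have "v = 0\<^sub>v n" using dv by (intro eq_vecI) auto
      then show False using vnz by simp
    qed
    then show ?thesis using that by blast
  qed
  have nnpos: "nn g > 0" unfolding nng
    by (rule sum_pos2[of _ k0]) (use k0 in \<open>auto intro!: mult_nonneg_nonneg mult_pos_pos pw_pos less_imp_le[OF pw_pos]\<close>)
  have Pop_e: "Pop g (e i) = (\<Sum>j<n. P (e i) (e j) * v $ j)" for i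
  proof -
    have "Pop g (e i) = sum (\<lambda>y. P (e i) y * g y) \<Omega>"
      unfolding Pop_def by (rule infsum_supp(1)[OF fin]) (simp add: gout)
    also have "\<dots> = (\<Sum>j<n. P (e i) (e j) * g (e j))" by (rule sumO)
    also have "\<dots> = (\<Sum>j<n. P (e i) (e j) * v $ j)" by (rule sum.cong) (simp_all add: ge)
    finally show ?thesis .
  qed
  have Mv_i: "(M *\<^sub>v v) $ i = v $ i - (\<Sum>j<n. P (e i) (e j) * v $ j)" if i: "i < n" for i
  proof -
    have "(M *\<^sub>v v) $ i = (\<Sum>j\<in>{0..<n}. M $$ (i,j) * v $ j)"
      using i Mc dv by (simp add: scalar_prod_def)
    also have "\<dots> = (\<Sum>j<n. ((if i = j then 1 else 0) - P (e i) (e j)) * v $ j)"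
      unfolding M_def using i by (intro sum.cong) (auto simp: lessThan_atLeast0)
    also have "\<dots> = (\<Sum>j<n. (if i = j then v $ j else 0) - P (e i) (e j) * v $ j)"
      by (rule sum.cong) (auto simp: left_diff_distrib)
    also have "\<dots> = (\<Sum>j<n. (if i = j then v $ j else 0)) - (\<Sum>j<n. P (e i) (e j) * v $ j)"
      by (rule sum_subtractf)
    also have "(\<Sum>j<n. (if i = j then v $ j else 0)) = v $ i" using i by (simp add: sum.delta)
    finally show ?thesis .
  qed
  have Lr_e: "Lr g (e i) = lam i0 * v $ i" if i: "i < n" for i
  proof -
    have "Lr g (e i) = v $ i - (\<Sum>j<n. P (e i) (e j) * v $ j)"
      unfolding Lr_def using ge[OF i] Pop_e by simp
    also have "\<dots> = (M *\<^sub>v v) $ i" using Mv_i[OF i] by simp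
    also have "\<dots> = lam i0 * v $ i" unfolding Mv using i dv by simp
    finally show ?thesis .
  qed
  have ipg: "ip (Lr g) g = lam i0 * nn g"
  proof -
    have "ip (Lr g) g = sum (\<lambda>x. pw x * Lr g x * g x) \<Omega>"
      unfolding ip_def by (rule infsum_supp(1)[OF fin]) (simp add: gout)
    also have "\<dots> = (\<Sum>i<n. pw (e i) * Lr g (e i) * g (e i))" by (rule sumO)
    also have "\<dots> = (\<Sum>i<n. lam i0 * (pw (e i) * (v $ i)^2))"
      by (rule sum.cong) (simp_all add: ge Lr_e power2_eq_square algebra_simps)
    also have "\<dots> = lam i0 * nn g" unfolding nng by (simp add: sum_distrib_left)
    finally show ?thesis .
  qed
  show ?thesis using gR nnpos ipg by blast
qed

lemma eigen_RQ:
  assumes fin: "finite \<Omega>" and de: "dirichlet_eigenvalues c \<Omega> lam" and n1: "1 \<le> card \<Omega>"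
  shows "RQ \<noteq> {} \<and> Inf RQ \<le> lam 1"
proof -
  obtain g where g: "R2 g" "nn g > 0" "ip (Lr g) g = lam 1 * nn g"
    using eigen_vec[OF fin de order.refl n1] by blast
  have mem: "lam 1 \<in> RQ" unfolding RQ_def using g by (intro CollectI exI[of _ g]) simp
  then show ?thesis using cInf_lower[OF mem RQ_bdd] by blast
qed

end


lemma det2:
  fixes A :: "'a::comm_ring_1 mat"
  assumes A: "A \<in> carrier_mat 2 2"
  shows "det A = A $$ (0,0) * A $$ (1,1) - A $$ (0,1) * A $$ (1,0)"
proof -
  have A': "A \<in> carrier_mat (Suc 1) (Suc 1)" using A by (simp add: numeral_2_eq_2)
  have "det A = (\<Sum>j<2. A $$ (0,j) * cofactor A 0 j)" by (rule laplace_expansion_row[OF A]) simp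
  also have "\<dots> = A $$ (0,0) * cofactor A 0 0 + A $$ (0,1) * cofactor A 0 1"
    by (simp add: numeral_2_eq_2)
  also have "cofactor A 0 0 = A $$ (1,1)"
  proof -
    have c1: "mat_delete A 0 0 \<in> carrier_mat 1 1" using mat_delete_carrier[OF A] by simp
    have "A $$ (insert_index 0 0, insert_index 0 0) = mat_delete A 0 0 $$ (0, 0)"
      by (rule mat_delete_index[OF A']) auto
    then show ?thesis unfolding cofactor_def det_single[OF c1] by (simp add: insert_index_def)
  qed
  also have "cofactor A 0 1 = - A $$ (1,0)"
  proof -
    have c1: "mat_delete A 0 1 \<in> carrier_mat 1 1" using mat_delete_carrier[OF A] by simp
    have "A $$ (insert_index 0 0, insert_index 1 0) = mat_delete A 0 1 $$ (0, 0)"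
      by (rule mat_delete_index[OF A']) auto
    then show ?thesis unfolding cofactor_def det_single[OF c1] by (simp add: insert_index_def)
  qed
  finally show ?thesis by (simp add: algebra_simps)
qed

context netw begin

lemma two_point_eigs:
  assumes xy: "x \<noteq> y"
  defines "a \<equiv> P x x" and "b \<equiv> P y y" and "p \<equiv> P x y" and "q \<equiv> P y x"
  defines "T \<equiv> 2 - a - b" and "D \<equiv> (a - b)^2 + 4 * p * q"
  shows "\<exists>lam'. dirichlet_eigenvalues c {x,y} lam' \<and> lam' 1 = (T - sqrt D)/2 \<and> lam' 2 = (T + sqrt D)/2"
proof -
  define l1 where "l1 = (T - sqrt D)/2"
  define l2 where "l2 = (T + sqrt D)/2"
  have D0: "D \<ge> 0" unfolding D_def p_def q_def using P_nonneg by simp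
  have sum12: "l1 + l2 = T" unfolding l1_def l2_def by (simp add: field_simps)
  have prod12: "l1 * l2 = (1-a)*(1-b) - p*q"
  proof -
    have "l1 * l2 = (T^2 - (sqrt D)^2)/4" unfolding l1_def l2_def by (simp add: field_simps power2_eq_square)
    also have "(sqrt D)^2 = D" using D0 by simp
    finally show ?thesis unfolding T_def D_def by (simp add: field_simps power2_eq_square)
  qed
  define e where "e = (\<lambda>i::nat. if i = 0 then x else y)"
  define lam' where "lam' = (\<lambda>i::nat. if i = 1 then l1 else l2)"
  have card2: "card {x,y} = 2" using xy by simp
  have bij: "bij_betw e {0..<2} {x,y}"
  proof -
    have set01: "{0..<2::nat} = {0,1}" by auto
    show ?thesis unfolding bij_betw_def set01 e_def using xy by auto
  qed
  define M where "M = mat 2 2 (\<lambda>(i,j). (if i = j then 1 else 0) - P (e i) (e j))"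
  have Mc: "M \<in> carrier_mat 2 2" unfolding M_def by simp
  define CM where "CM = char_poly_matrix M"
  have CMc: "CM \<in> carrier_mat 2 2" unfolding CM_def using Mc by simp
  have CMe: "CM $$ (i,j) = (if i = j then [:0,1:] else 0) + [: - (M $$ (i,j)) :]" if "i < 2" "j < 2" for i j
    unfolding CM_def char_poly_matrix_def using that Mc by auto
  have Me: "M $$ (0,0) = 1 - a" "M $$ (1,1) = 1 - b" "M $$ (0,1) = - p" "M $$ (1,0) = - q"
    unfolding M_def a_def b_def p_def q_def e_def by auto
  have cp: "char_poly M = [:- l1, 1:] * [:- l2, 1:]"
  proof -
    have "char_poly M = CM $$ (0,0) * CM $$ (1,1) - CM $$ (0,1) * CM $$ (1,0)"
      unfolding char_poly_def CM_def[symmetric] by (rule det2[OF CMc])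
    also have "\<dots> = [:a - 1, 1:] * [:b - 1, 1:] - [:p:] * [:q:]"
      using CMe Me by simp
    also have "\<dots> = [:- l1, 1:] * [:- l2, 1:]"
    proof (rule poly_eq_poly_eq_iff[THEN iffD1], rule ext)
      fix t :: real
      have "poly ([:a - 1, 1:] * [:b - 1, 1:] - [:p:] * [:q:]) t = (t + a - 1)*(t + b - 1) - p*q"
        by (simp add: algebra_simps)
      also have "\<dots> = t^2 - (l1 + l2) * t + l1 * l2" unfolding sum12 prod12 T_def
        by (simp add: algebra_simps power2_eq_square)
      also have "\<dots> = poly ([:- l1, 1:] * [:- l2, 1:]) t" by (simp add: algebra_simps power2_eq_square)
      finally show "poly ([:a - 1, 1:] * [:b - 1, 1:] - [:p:] * [:q:]) t = poly ([:- l1, 1:] * [:- l2, 1:]) t" .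
    qed
    finally show ?thesis .
  qed
  have prod: "(\<Prod>i\<in>{1..2::nat}. [:- lam' i, 1:]) = [:- l1, 1:] * [:- l2, 1:]"
  proof -
    have "{1..2::nat} = {1,2}" by auto
    then show ?thesis unfolding lam'_def by simp
  qed
  have l12: "l1 \<le> l2" unfolding l1_def l2_def using D0 by simp
  have sorted: "\<forall>i j. 1 \<le> i \<longrightarrow> i \<le> j \<longrightarrow> j \<le> card {x,y} \<longrightarrow> lam' i \<le> lam' j"
    unfolding card2 lam'_def using l12 by auto
  have cpe: "char_poly (mat (card {x,y}) (card {x,y}) (\<lambda>(i,j). (if i = j then 1 else 0) - P (e i) (e j)))
      = (\<Prod>i\<in>{1..card {x,y}}. [:- lam' i, 1:])"
    unfolding card2 using cp[unfolded M_def] prod by simp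
  have "dirichlet_eigenvalues c {x,y} lam'"
    unfolding dirichlet_eigenvalues_def
  proof (intro conjI)
    show "\<forall>i j. 1 \<le> i \<longrightarrow> i \<le> j \<longrightarrow> j \<le> card {x,y} \<longrightarrow> lam' i \<le> lam' j" by (rule sorted)
    show "\<exists>e. bij_betw e {0..<card {x,y}} {x,y} \<and> char_poly (mat (card {x,y}) (card {x,y})
           (\<lambda>(i,j). (if i = j then 1 else 0) - P (e i) (e j))) = (\<Prod>i\<in>{1..card {x,y}}. [:- lam' i, 1:])"
      by (rule exI[of _ e]) (use bij cpe card2 in simp)
  qed
  moreover have "lam' 1 = l1" "lam' 2 = l2" unfolding lam'_def by auto
  ultimately show ?thesis unfolding l1_def l2_def by blast
qed

lemma offdiag_zero:
  assumes yt: "yang_type c C" and C: "C < 0" and xy: "x \<noteq> y"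
  shows "c x y = 0"
proof -
  define a where "a = P x x"
  define b where "b = P y y"
  define p where "p = P x y"
  define q where "q = P y x"
  define T where "T = 2 - a - b"
  define D where "D = (a - b)^2 + 4 * p * q"
  obtain lam' where de: "dirichlet_eigenvalues c {x,y} lam'" and
    l1: "lam' 1 = (T - sqrt D)/2" and l2: "lam' 2 = (T + sqrt D)/2"
    using two_point_eigs[OF xy] unfolding a_def b_def p_def q_def T_def D_def by blast
  have fin: "finite {x,y}" by simp
  have card2: "card {x,y} = 2" using xy by simp
  have "RQ \<noteq> {} \<and> Inf RQ \<le> lam' 1" by (rule eigen_RQ[OF fin de]) (simp add: card2)
  then have lm: "lambda_min c \<le> lam' 1" using spec_facts(1) by (meson order_trans)
  have Y: "(\<Sum>i=1..1. (lam' (1+1) - lam' i)^2 * (1 - lam' i))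
      \<le> C * (\<Sum>i=1..1. (lam' (1+1) - lam' i) * (lam' i - lambda_min c))"
    using yt[unfolded yang_type_def, rule_format, of "{x,y}" lam' 1] fin de card2 by simp
  define s where "s = sqrt D"
  have s0: "s \<ge> 0" unfolding s_def D_def p_def q_def using P_nonneg by simp
  have d21: "lam' 2 - lam' 1 = s" unfolding l1 l2 s_def by (simp add: field_simps)
  have Y': "s^2 * (1 - lam' 1) \<le> C * (s * (lam' 1 - lambda_min c))"
    using Y d21 by (simp add: numeral_2_eq_2)
  have l1le: "lam' 1 \<le> 1 - s/2"
    unfolding l1 s_def[symmetric] T_def a_def b_def using P_nonneg[of x x] P_nonneg[of y y] by simp
  have "s = 0"
  proof (rule ccontr)
    assume "s \<noteq> 0"
    then have sp: "s > 0" using s0 by simp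
    have "C * (s * (lam' 1 - lambda_min c)) \<le> 0"
      using C sp lm by (intro mult_nonpos_nonneg) auto
    then have "s^2 * (1 - lam' 1) \<le> 0" using Y' by simp
    moreover have "s^2 * (1 - lam' 1) > 0" using sp l1le by simp
    ultimately show False by simp
  qed
  then have "D = 0" unfolding s_def using D_def by (metis real_sqrt_eq_zero_cancel_iff)
  moreover have "(a - b)^2 \<ge> 0" "4 * p * q \<ge> 0" unfolding p_def q_def using P_nonneg by auto
  ultimately have "4 * p * q = 0" unfolding D_def by linarith
  then have "p * q = 0" by simp
  then have "p = 0 \<or> q = 0" by simp
  then show ?thesis unfolding p_def q_def trans_P_def using pw_pos[of x] pw_pos[of y] c_sym[of x y] by auto
qed

lemma no_edges_Lr:
  assumes ne: "\<And>x y. x \<noteq> y \<Longrightarrow> c x y = 0"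
  shows "Lr g x = 0"
proof -
  have pwx: "pw x = c x x"
    unfolding pi_w_def using infsum_supp(1)[of "{x}" "c x"] ne by simp
  have Pxx: "P x x = 1" unfolding trans_P_def pwx[symmetric] using pw_pos[of x] by simp
  have "Pop g x = sum (\<lambda>y. P x y * g y) {x}"
    unfolding Pop_def by (rule infsum_supp(1)) (auto simp: trans_P_def ne)
  then show ?thesis unfolding Lr_def using Pxx by simp
qed

lemma no_edges_lam:
  assumes ne: "\<And>x y. x \<noteq> y \<Longrightarrow> c x y = 0"
    and fin: "finite \<Omega>" and de: "dirichlet_eigenvalues c \<Omega> lam" and i: "1 \<le> i" "i \<le> card \<Omega>"
  shows "lam i = 0"
proof -
  obtain g where g: "R2 g" "nn g > 0" "ip (Lr g) g = lam i * nn g"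
    using eigen_vec[OF fin de i] by blast
  have "ip (Lr g) g = 0" unfolding ip_def using no_edges_Lr[OF ne] by simp
  then show ?thesis using g by simp
qed

end


theorem corollary5p6:
  fixes c :: "'a::countable \<Rightarrow> 'a \<Rightarrow> real" and C :: real and \<Omega> :: "'a set"
    and lam :: "nat \<Rightarrow> real" and k :: nat and \<delta> :: real
  assumes "network c" and "yang_type c C"
    and "finite \<Omega>" and "dirichlet_eigenvalues c \<Omega> lam"
    and "1 \<le> k" and "k < card \<Omega>"
    and "\<delta> > 0" and "lam k \<le> 1 - \<delta>"
  shows "lam (k+1) - lambda_min c
           \<le> (1 + C / \<delta>) * (real k) powr (C / \<delta> / 2) * (lam 1 - lambda_min c)"
proof -
  note net = assms(1) and yt = assms(2) and fin = assms(3) and de = assms(4)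
    and k1 = assms(5) and kn = assms(6) and d0 = assms(7) and lk = assms(8)
  interpret netw c using net by unfold_locales
  define lm where "lm = lambda_min c"
  have n1: "1 \<le> card \<Omega>" using k1 kn by simp
  have er: "RQ \<noteq> {} \<and> Inf RQ \<le> lam 1" by (rule eigen_RQ[OF fin de n1])
  have lm1: "lm \<le> lam 1" unfolding lm_def using er spec_facts(1) by (meson order_trans)
  have lm0: "0 \<le> lm" unfolding lm_def using er spec_facts(2) by blast
  have sorted: "\<And>i j. 1 \<le> i \<Longrightarrow> i \<le> j \<Longrightarrow> j \<le> card \<Omega> \<Longrightarrow> lam i \<le> lam j"
    using de unfolding dirichlet_eigenvalues_def by blast
  define \<mu> where "\<mu> = (\<lambda>i. lam i - lm)"
  have con: "\<delta> * (\<Sum>i=1..j. (\<mu>(j+1) - \<mu> i)^2) \<le> C * (\<Sum>i=1..j. (\<mu>(j+1) - \<mu> i) * \<mu> i)"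
    if j: "1 \<le> j" "j \<le> k" for j
  proof -
    have Y: "(\<Sum>i=1..j. (lam (j+1) - lam i)^2 * (1 - lam i))
        \<le> C * (\<Sum>i=1..j. (lam (j+1) - lam i) * (lam i - lambda_min c))"
      using yt[unfolded yang_type_def, rule_format, of \<Omega> lam j] fin de j kn by simp
    have "\<delta> * (\<Sum>i=1..j. (\<mu>(j+1) - \<mu> i)^2) = (\<Sum>i=1..j. (lam (j+1) - lam i)^2 * \<delta>)"
      unfolding \<mu>_def by (simp add: sum_distrib_left algebra_simps)
    also have "\<dots> \<le> (\<Sum>i=1..j. (lam (j+1) - lam i)^2 * (1 - lam i))"
    proof (rule sum_mono)
      fix i assume i: "i \<in> {1..j}"
      have "lam i \<le> lam k" using sorted[of i k] i j kn by auto
      then have "\<delta> \<le> 1 - lam i" using lk by simp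
      then show "(lam (j+1) - lam i)^2 * \<delta> \<le> (lam (j+1) - lam i)^2 * (1 - lam i)"
        by (rule mult_left_mono) simp
    qed
    also have "\<dots> \<le> C * (\<Sum>i=1..j. (lam (j+1) - lam i) * (lam i - lambda_min c))" by (rule Y)
    also have "\<dots> = C * (\<Sum>i=1..j. (\<mu>(j+1) - \<mu> i) * \<mu> i)" unfolding \<mu>_def lm_def by simp
    finally show ?thesis .
  qed
  have goal_eq: "lam (k+1) - lambda_min c = \<mu> (k+1)" "lam 1 - lambda_min c = \<mu> 1"
    unfolding \<mu>_def lm_def by auto
  show ?thesis unfolding goal_eq
  proof (cases "C > 0")
    case True
    define a where "a = C / \<delta> / 2"
    have a0: "a > 0" unfolding a_def using True d0 by simp
    have con': "(\<Sum>i=1..j. (\<mu>(j+1) - \<mu> i)^2) \<le> 2*a*(\<Sum>i=1..j. (\<mu>(j+1) - \<mu> i) * \<mu> i)"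
      if "1 \<le> j" "j \<le> k" for j
    proof -
      have "\<delta> * (\<Sum>i=1..j. (\<mu>(j+1) - \<mu> i)^2) \<le> \<delta> * (2*a*(\<Sum>i=1..j. (\<mu>(j+1) - \<mu> i) * \<mu> i))"
        using con[OF that] d0 unfolding a_def by simp
      then show ?thesis using d0 by simp
    qed
    have m1: "\<mu> 1 \<ge> 0" unfolding \<mu>_def using lm1 by simp
    have "\<mu>(k+1) \<le> (1+2*a) * real k powr a * \<mu> 1" by (rule cheng_yang[OF a0 k1 con' m1])
    then show "\<mu>(k+1) \<le> (1 + C/\<delta>) * real k powr (C/\<delta>/2) * \<mu> 1" unfolding a_def by simp
  next
    case False
    show "\<mu>(k+1) \<le> (1 + C/\<delta>) * real k powr (C/\<delta>/2) * \<mu> 1"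
    proof (cases "C = 0")
      case True
      have "\<delta> * (\<Sum>i=1..k. (\<mu>(k+1) - \<mu> i)^2) \<le> 0" using con[OF k1 order.refl] True by simp
      then have s0: "(\<Sum>i=1..k. (\<mu>(k+1) - \<mu> i)^2) \<le> 0" using d0 by (simp add: mult_le_0_iff)
      have "(\<Sum>i=1..k. (\<mu>(k+1) - \<mu> i)^2) = 0"
      proof -
        have "0 \<le> (\<Sum>i=1..k. (\<mu>(k+1) - \<mu> i)^2)" by (rule sum_nonneg) simp
        then show ?thesis using s0 by linarith
      qed
      then have "\<forall>i\<in>{1..k}. (\<mu>(k+1) - \<mu> i)^2 = 0" by (subst (asm) sum_nonneg_eq_0_iff) auto
      then have "\<mu>(k+1) = \<mu> 1" using k1 by auto
      then show ?thesis using True k1 by simp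
    next
      case False
      then have Cn: "C < 0" using \<open>\<not> C > 0\<close> by simp
      have ne: "\<And>x y. x \<noteq> y \<Longrightarrow> c x y = 0" by (rule offdiag_zero[OF yt Cn])
      have l1: "lam 1 = 0" by (rule no_edges_lam[OF ne fin de]) (use n1 in auto)
      have lk1: "lam (k+1) = 0" by (rule no_edges_lam[OF ne fin de]) (use kn in auto)
      have "lm = 0" using lm0 lm1 l1 by simp
      then show ?thesis unfolding \<mu>_def using l1 lk1 by simp
    qed
  qed
qed


end
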